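(* Let $1+\frac1n<p<1+\frac{3}{2n}$ and $a\in\mathbb R^n\setminus\{0\}$. Define $S^*_{0,2}:\mathbb R^n\to\mathbb R$ by $$S^*_{0,2}(x)=\Big(\int_0^1a\cdot\nabla e^{(1-\theta)\Delta}\Big(G_\theta^{p-1}\int_0^\theta a\cdot\nabla e^{(\theta-\tau)\Delta}G_\tau^p\,d\tau\Big)d\theta\Big)(x).$$ Then $S^*_{0,2}$ is continuous and bounded, and $S^*_{0,2}(0)<0$; in particular $S^*_{0,2}\not\equiv0$.
   Context: $G_t(x)=(4\pi t)^{-n/2}e^{-|x|^2/(4t)}$ for $t>0$, $x\in\mathbb R^n$, and $e^{t\Delta}\varphi=G_t*\varphi$. $G_\theta^{p}$ denotes the pointwise $p$-th power of $G_\theta$. *)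

theory Defs
  imports "HOL-Analysis.Analysis"
begin

definition heat_kernel :: "real \<Rightarrow> real ^ 'n \<Rightarrow> real" where
  "heat_kernel t x = (4 * pi * t) powr (- (real CARD('n) / 2)) * exp (- (norm x)\<^sup>2 / (4 * t))"

definition heat_sg :: "real \<Rightarrow> (real ^ 'n \<Rightarrow> real) \<Rightarrow> real ^ 'n \<Rightarrow> real" where
  "heat_sg t \<phi> x = (\<integral> y. heat_kernel t (x - y) * \<phi> y \<partial>lborel)"

definition dir_deriv :: "real ^ 'n \<Rightarrow> (real ^ 'n \<Rightarrow> real) \<Rightarrow> real ^ 'n \<Rightarrow> real" where
  "dir_deriv a u x = deriv (\<lambda>h. u (x + h *\<^sub>R a)) 0"

definition S02 :: "real ^ 'n \<Rightarrow> real \<Rightarrow> real ^ 'n \<Rightarrow> real" where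
  "S02 a p x =
     (LINT \<theta>:{0<..<1}|lborel.
        dir_deriv a
          (heat_sg (1 - \<theta>)
             (\<lambda>y. heat_kernel \<theta> y powr (p - 1) *
                  (LINT \<tau>:{0<..<\<theta>}|lborel.
                     dir_deriv a (heat_sg (\<theta> - \<tau>) (\<lambda>z. heat_kernel \<tau> z powr p)) y)))
          x)"

end

theory Submission
  imports Defs "HOL-Probability.Probability"
begin


lemma gauss_1d: "has_bochner_integral lborel (\<lambda>x::real. exp (- x\<^sup>2)) (sqrt pi)"
proof -
  have "has_bochner_integral lborel (\<lambda>x. sqrt pi * normal_density 0 (sqrt (1/2)) x) (sqrt pi * 1)"
    by (intro has_bochner_integral_mult_right) (simp add: has_bochner_integral_iff)
  moreover have "sqrt pi * normal_density 0 (sqrt (1/2)) x = exp (- x\<^sup>2)" for x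
    by (simp add: normal_density_def real_sqrt_mult)
  ultimately show ?thesis by simp
qed

lemma gauss_nd:
  "has_bochner_integral lborel (\<lambda>x::'a::euclidean_space. exp (- (norm x)\<^sup>2)) (sqrt pi ^ DIM('a))"
proof -
  interpret product_sigma_finite "\<lambda>_::'a. lborel::real measure" ..
  have eq: "exp (- (norm (\<Sum>b\<in>Basis. f b *\<^sub>R b :: 'a))\<^sup>2) = (\<Prod>b\<in>Basis. exp (- (f b)\<^sup>2))" for f
  proof -
    have "(norm (\<Sum>b\<in>Basis. f b *\<^sub>R b :: 'a))\<^sup>2 = (\<Sum>b\<in>Basis. (f b)\<^sup>2)"
      by (simp add: norm_eq_sqrt_inner inner_sum_left inner_sum_right inner_Basis sum.delta
          if_distrib cong: if_cong) (simp add: power2_eq_square abs_of_nonneg sum_nonneg)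
    then show ?thesis by (simp add: exp_sum[symmetric] sum_negf)
  qed
  have i1: "integrable (Pi\<^sub>M (Basis::'a set) (\<lambda>_. lborel)) (\<lambda>f. \<Prod>b\<in>Basis. exp (- (f b::real)\<^sup>2))"
    using product_integrable_prod[of "Basis::'a set" "\<lambda>_ x. exp (- x\<^sup>2)"] gauss_1d
    by (simp add: has_bochner_integral_iff)
  have v1: "(\<integral>f. (\<Prod>b\<in>Basis. exp (- (f b::real)\<^sup>2)) \<partial>Pi\<^sub>M (Basis::'a set) (\<lambda>_. lborel)) = sqrt pi ^ DIM('a)"
    using product_integral_prod[of "Basis::'a set" "\<lambda>_ x. exp (- x\<^sup>2)"] gauss_1d
    by (simp add: has_bochner_integral_iff)
  have m: "(\<lambda>f. \<Sum>b\<in>Basis. f b *\<^sub>R b :: 'a) \<in> measurable (Pi\<^sub>M Basis (\<lambda>_. lborel)) borel"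
    by measurable
  show ?thesis
    unfolding has_bochner_integral_iff
    apply (subst (1 2) lborel_eq)
    apply (subst integrable_distr_eq[OF m], measurable)
    apply (subst integral_distr[OF m], measurable)
    using i1 v1 by (simp add: eq)
qed

lemma hbi_affine:
  fixes f :: "'a::euclidean_space \<Rightarrow> real"
  assumes s: "s \<noteq> 0" and f[measurable]: "f \<in> borel_measurable borel"
    and h: "has_bochner_integral lborel (\<lambda>x. \<bar>s\<bar>^DIM('a) * f (c + s *\<^sub>R x)) I"
  shows "has_bochner_integral lborel f I"
proof -
  have "has_bochner_integral (density (distr lborel borel (\<lambda>x. c + s *\<^sub>R x)) (\<lambda>_. \<bar>s\<bar>^DIM('a))) f I"
    by (rule has_bochner_integral_density) (auto intro!: has_bochner_integral_distr simp: h)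
  then show ?thesis using lborel_affine[OF s, of c] by simp
qed

lemma gauss_shift:
  fixes c :: "'a::euclidean_space"
  assumes a: "\<alpha> > 0"
  shows "has_bochner_integral lborel (\<lambda>x. exp (- \<alpha> * (norm (x - c))\<^sup>2))
           (sqrt pi ^ DIM('a) * \<alpha> powr (- real DIM('a) / 2))"
proof (rule hbi_affine[where s="1 / sqrt \<alpha>" and c=c])
  let ?s = "1 / sqrt \<alpha>"
  have "\<bar>?s\<bar> ^ DIM('a) = \<alpha> powr (- real DIM('a) / 2)"
    using a by (simp add: powr_minus_divide powr_realpow[symmetric] powr_powr divide_simps
       powr_half_sqrt[symmetric] powr_divide)
  moreover have "exp (- \<alpha> * (norm (c + ?s *\<^sub>R x - c))\<^sup>2) = exp (- (norm x)\<^sup>2)" for x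
    using a by (simp add: power_mult_distrib power_divide)
  ultimately show "has_bochner_integral lborel (\<lambda>x. \<bar>?s\<bar> ^ DIM('a) * exp (- \<alpha> * (norm (c + ?s *\<^sub>R x - c))\<^sup>2))
           (sqrt pi ^ DIM('a) * \<alpha> powr (- real DIM('a) / 2))"
    using has_bochner_integral_mult_right[OF gauss_nd, of "\<alpha> powr (- real DIM('a) / 2)"]
    by (simp add: mult.commute)
qed (use a in auto)

lemma r_exp_bound:
  fixes r :: real assumes a: "\<alpha> > 0"
  shows "\<bar>r\<bar> * exp (- \<alpha> * r\<^sup>2) \<le> exp (- \<alpha> * r\<^sup>2) + 2 / \<alpha> * exp (- (\<alpha> / 2) * r\<^sup>2)"
proof -
  have 1: "\<bar>r\<bar> \<le> 1 + r\<^sup>2"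
  proof -
    have "0 \<le> (\<bar>r\<bar> - 1)\<^sup>2" by simp
    then have "0 \<le> \<bar>r\<bar>\<^sup>2 - 2 * \<bar>r\<bar> + 1" by (simp add: power2_diff)
    then show ?thesis by simp
  qed
  have "\<alpha> * r\<^sup>2 / 2 \<le> exp (\<alpha> * r\<^sup>2 / 2)" using exp_ge_add_one_self[of "\<alpha> * r\<^sup>2 / 2"] by linarith
  then have "r\<^sup>2 \<le> 2 / \<alpha> * exp (\<alpha> * r\<^sup>2 / 2)" using a by (simp add: field_simps)
  then have 2: "r\<^sup>2 * exp (- \<alpha> * r\<^sup>2) \<le> 2 / \<alpha> * exp (- (\<alpha> / 2) * r\<^sup>2)"
  proof -
    assume h: "r\<^sup>2 \<le> 2 / \<alpha> * exp (\<alpha> * r\<^sup>2 / 2)"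
    have "r\<^sup>2 * exp (- \<alpha> * r\<^sup>2) \<le> 2 / \<alpha> * exp (\<alpha> * r\<^sup>2 / 2) * exp (- \<alpha> * r\<^sup>2)"
      by (rule mult_right_mono[OF h]) simp
    also have "\<dots> = 2 / \<alpha> * exp (- (\<alpha> / 2) * r\<^sup>2)"
      by (simp add: mult.assoc exp_add[symmetric])
    finally show ?thesis .
  qed
  have "\<bar>r\<bar> * exp (- \<alpha> * r\<^sup>2) \<le> (1 + r\<^sup>2) * exp (- \<alpha> * r\<^sup>2)"
    by (rule mult_right_mono[OF 1]) simp
  also have "\<dots> = exp (- \<alpha> * r\<^sup>2) + r\<^sup>2 * exp (- \<alpha> * r\<^sup>2)" by (simp add: algebra_simps)
  finally show ?thesis using 2 by linarith
qed

lemma gauss_shift_int: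
  fixes c :: "'a::euclidean_space" assumes "\<alpha> > 0"
  shows "integrable lborel (\<lambda>x. exp (- \<alpha> * (norm (x - c))\<^sup>2))"
  using gauss_shift[OF assms, of c] by (simp add: has_bochner_integral_iff)

lemma moment1_int:
  fixes c a :: "'a::euclidean_space" assumes a: "\<alpha> > 0"
  shows "integrable lborel (\<lambda>x. (a \<bullet> (x - c)) * exp (- \<alpha> * (norm (x - c))\<^sup>2))"
proof (rule Bochner_Integration.integrable_bound)
  show "integrable lborel (\<lambda>x. norm a * (exp (- \<alpha> * (norm (x - c))\<^sup>2) + 2 / \<alpha> * exp (- (\<alpha> / 2) * (norm (x - c))\<^sup>2)))"
    using gauss_shift_int[OF a, of c] gauss_shift_int[of "\<alpha>/2" c] a by auto
  show "AE x in lborel. norm ((a \<bullet> (x - c)) * exp (- \<alpha> * (norm (x - c))\<^sup>2))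
      \<le> norm (norm a * (exp (- \<alpha> * (norm (x - c))\<^sup>2) + 2 / \<alpha> * exp (- (\<alpha> / 2) * (norm (x - c))\<^sup>2)))"
  proof (rule AE_I2)
    fix x
    have "norm ((a \<bullet> (x - c)) * exp (- \<alpha> * (norm (x - c))\<^sup>2)) \<le> norm a * (norm (x - c) * exp (- \<alpha> * (norm (x - c))\<^sup>2))"
      using Cauchy_Schwarz_ineq2[of a "x - c"] by (simp add: abs_mult mult.assoc mult_right_mono)
    also have "\<dots> \<le> norm a * (exp (- \<alpha> * (norm (x - c))\<^sup>2) + 2 / \<alpha> * exp (- (\<alpha> / 2) * (norm (x - c))\<^sup>2))"
      using r_exp_bound[OF a, of "norm (x - c)"] by (intro mult_left_mono) auto
    finally show "norm ((a \<bullet> (x - c)) * exp (- \<alpha> * (norm (x - c))\<^sup>2))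
      \<le> norm (norm a * (exp (- \<alpha> * (norm (x - c))\<^sup>2) + 2 / \<alpha> * exp (- (\<alpha> / 2) * (norm (x - c))\<^sup>2)))"
      using a by simp
  qed
qed measurable

lemma moment1_zero:
  fixes c a :: "'a::euclidean_space" assumes a: "\<alpha> > 0"
  shows "has_bochner_integral lborel (\<lambda>x. (a \<bullet> (x - c)) * exp (- \<alpha> * (norm (x - c))\<^sup>2)) 0"
proof -
  define f where "f = (\<lambda>x. (a \<bullet> (x - c)) * exp (- \<alpha> * (norm (x - c))\<^sup>2))"
  define J where "J = integral\<^sup>L lborel f"
  have hJ: "has_bochner_integral lborel f J"
    using moment1_int[OF a, of a c] by (simp add: has_bochner_integral_iff J_def f_def)
  have "has_bochner_integral lborel f (- J)"
  proof (rule hbi_affine[where s="-1" and c="2 *\<^sub>R c"])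
    have "f (2 *\<^sub>R c + (-1) *\<^sub>R x) = - f x" for x
    proof -
      have e: "2 *\<^sub>R c + (-1) *\<^sub>R x - c = c - x" by (simp add: algebra_simps scaleR_2)
      have "a \<bullet> (c - x) = - (a \<bullet> (x - c))" by (simp add: inner_diff_right)
      then show ?thesis unfolding f_def e using norm_minus_commute[of c x] by simp
    qed
    then show "has_bochner_integral lborel (\<lambda>x. \<bar>-1::real\<bar> ^ DIM('a) * f (2 *\<^sub>R c + (-1) *\<^sub>R x)) (- J)"
      using has_bochner_integral_minus[OF hJ] by simp
  qed (auto simp: f_def)
  with hJ have "J = - J" using has_bochner_integral_eq by blast
  then have "J = 0" by simp
  with hJ show ?thesis by (simp add: f_def)
qed

lemma sq_ident:
  fixes x y :: "'a::euclidean_space" assumes a: "\<alpha> > 0" and b: "\<beta> > 0"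
  shows "\<alpha> * (norm (x - y))\<^sup>2 + \<beta> * (norm y)\<^sup>2 =
    (\<alpha> + \<beta>) * (norm (y - (\<alpha> / (\<alpha> + \<beta>)) *\<^sub>R x))\<^sup>2 + \<alpha> * \<beta> / (\<alpha> + \<beta>) * (norm x)\<^sup>2"
proof -
  have ab: "\<alpha> + \<beta> > 0" using a b by simp
  define t where "t = \<alpha> / (\<alpha> + \<beta>)"
  have n1: "(norm (x - y))\<^sup>2 = x \<bullet> x - 2 * (x \<bullet> y) + y \<bullet> y"
    unfolding power2_norm_eq_inner by (simp add: inner_diff_left inner_diff_right inner_commute)
  have n2: "(norm y)\<^sup>2 = y \<bullet> y" "(norm x)\<^sup>2 = x \<bullet> x" by (simp_all add: power2_norm_eq_inner)
  have n3: "(norm (y - t *\<^sub>R x))\<^sup>2 = y \<bullet> y - 2 * t * (x \<bullet> y) + t\<^sup>2 * (x \<bullet> x)"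
    unfolding power2_norm_eq_inner by (simp add: inner_diff_left inner_diff_right inner_commute power2_eq_square)
  have t1: "t * (\<alpha> + \<beta>) = \<alpha>" using ab by (simp add: t_def)
  have t2: "\<alpha> * t + \<alpha> * \<beta> / (\<alpha> + \<beta>) = \<alpha>"
  proof -
    have "\<alpha> * t + \<alpha> * \<beta> / (\<alpha> + \<beta>) = \<alpha> * (\<alpha> + \<beta>) / (\<alpha> + \<beta>)"
      by (simp add: t_def add_divide_distrib distrib_left)
    also have "\<dots> = \<alpha>" using ab by simp
    finally show ?thesis .
  qed
  have "(\<alpha> + \<beta>) * (y \<bullet> y - 2 * t * (x \<bullet> y) + t\<^sup>2 * (x \<bullet> x)) + \<alpha> * \<beta> / (\<alpha> + \<beta>) * (x \<bullet> x)
     = (\<alpha> + \<beta>) * (y \<bullet> y) - 2 * (t * (\<alpha> + \<beta>)) * (x \<bullet> y) + (t * (\<alpha> + \<beta>)) * t * (x \<bullet> x) + \<alpha> * \<beta> / (\<alpha> + \<beta>) * (x \<bullet> x)"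
    by (simp add: algebra_simps power2_eq_square)
  also have "\<dots> = (\<alpha> + \<beta>) * (y \<bullet> y) - 2 * \<alpha> * (x \<bullet> y) + (\<alpha> * t + \<alpha> * \<beta> / (\<alpha> + \<beta>)) * (x \<bullet> x)"
    unfolding t1 by (simp add: algebra_simps)
  also have "\<dots> = \<alpha> * (x \<bullet> x - 2 * (x \<bullet> y) + y \<bullet> y) + \<beta> * (y \<bullet> y)"
    unfolding t2 by (simp add: algebra_simps)
  finally show ?thesis unfolding t_def[symmetric] n1 n2 n3 by simp
qed

lemma conv0:
  fixes x :: "'a::euclidean_space" assumes a: "\<alpha> > 0" and b: "\<beta> > 0"
  shows "has_bochner_integral lborel (\<lambda>y. exp (- \<alpha> * (norm (x - y))\<^sup>2 - \<beta> * (norm y)\<^sup>2))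
     (sqrt pi ^ DIM('a) * (\<alpha> + \<beta>) powr (- real DIM('a) / 2) * exp (- (\<alpha> * \<beta> / (\<alpha> + \<beta>)) * (norm x)\<^sup>2))"
proof -
  let ?c = "(\<alpha> / (\<alpha> + \<beta>)) *\<^sub>R x"
  have e: "exp (- \<alpha> * (norm (x - y))\<^sup>2 - \<beta> * (norm y)\<^sup>2) =
     exp (- (\<alpha> + \<beta>) * (norm (y - ?c))\<^sup>2) * exp (- (\<alpha> * \<beta> / (\<alpha> + \<beta>)) * (norm x)\<^sup>2)" for y
  proof -
    have "- \<alpha> * (norm (x - y))\<^sup>2 - \<beta> * (norm y)\<^sup>2 = - (\<alpha> + \<beta>) * (norm (y - ?c))\<^sup>2 + - (\<alpha> * \<beta> / (\<alpha> + \<beta>)) * (norm x)\<^sup>2"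
      using sq_ident[OF a b, of x y] by linarith
    then show ?thesis by (simp only: exp_add)
  qed
  show ?thesis unfolding e
    by (rule has_bochner_integral_mult_left, rule gauss_shift) (use a b in simp)
qed

lemma conv1:
  fixes x a :: "'a::euclidean_space" assumes al: "\<alpha> > 0" and b: "\<beta> > 0"
  shows "has_bochner_integral lborel (\<lambda>y. (a \<bullet> y) * exp (- \<alpha> * (norm (x - y))\<^sup>2 - \<beta> * (norm y)\<^sup>2))
     (\<alpha> / (\<alpha> + \<beta>) * (a \<bullet> x) * (sqrt pi ^ DIM('a) * (\<alpha> + \<beta>) powr (- real DIM('a) / 2) * exp (- (\<alpha> * \<beta> / (\<alpha> + \<beta>)) * (norm x)\<^sup>2)))"
proof -
  let ?c = "(\<alpha> / (\<alpha> + \<beta>)) *\<^sub>R x"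
  let ?E = "exp (- (\<alpha> * \<beta> / (\<alpha> + \<beta>)) * (norm x)\<^sup>2)"
  have ab: "\<alpha> + \<beta> > 0" using al b by simp
  have e: "(a \<bullet> y) * exp (- \<alpha> * (norm (x - y))\<^sup>2 - \<beta> * (norm y)\<^sup>2) =
     ((a \<bullet> (y - ?c)) * exp (- (\<alpha> + \<beta>) * (norm (y - ?c))\<^sup>2) + (a \<bullet> ?c) * exp (- (\<alpha> + \<beta>) * (norm (y - ?c))\<^sup>2)) * ?E" for y
  proof -
    have "- \<alpha> * (norm (x - y))\<^sup>2 - \<beta> * (norm y)\<^sup>2 = - (\<alpha> + \<beta>) * (norm (y - ?c))\<^sup>2 + - (\<alpha> * \<beta> / (\<alpha> + \<beta>)) * (norm x)\<^sup>2"
      using sq_ident[OF al b, of x y] by linarith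
    then have "exp (- \<alpha> * (norm (x - y))\<^sup>2 - \<beta> * (norm y)\<^sup>2) = exp (- (\<alpha> + \<beta>) * (norm (y - ?c))\<^sup>2) * ?E" by (simp only: exp_add)
    moreover have "a \<bullet> y = a \<bullet> (y - ?c) + a \<bullet> ?c" by (simp add: inner_diff_right)
    ultimately show ?thesis by (simp add: algebra_simps)
  qed
  have "has_bochner_integral lborel (\<lambda>y. ((a \<bullet> (y - ?c)) * exp (- (\<alpha> + \<beta>) * (norm (y - ?c))\<^sup>2) + (a \<bullet> ?c) * exp (- (\<alpha> + \<beta>) * (norm (y - ?c))\<^sup>2)) * ?E)
     ((0 + (a \<bullet> ?c) * (sqrt pi ^ DIM('a) * (\<alpha> + \<beta>) powr (- real DIM('a) / 2))) * ?E)"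
    by (intro has_bochner_integral_mult_left has_bochner_integral_add has_bochner_integral_mult_right
        moment1_zero gauss_shift ab)
  then show ?thesis unfolding e by (simp add: mult_ac)
qed



lemma lipschitz_deriv:
  fixes f f' :: "real \<Rightarrow> real"
  assumes d: "\<And>h. DERIV f h :> f' h" and b: "\<And>h. \<bar>f' h\<bar> \<le> B"
  shows "\<bar>f t - f s\<bar> \<le> B * \<bar>t - s\<bar>"
proof -
  have *: "\<bar>f v - f u\<bar> \<le> B * \<bar>v - u\<bar>" if uv: "u < v" for u v
  proof -
    obtain z where "f v - f u = (v - u) * f' z" using MVT2[OF uv, of f f'] d by blast
    then have "\<bar>f v - f u\<bar> = \<bar>v - u\<bar> * \<bar>f' z\<bar>" by (simp add: abs_mult)
    also have "\<dots> \<le> \<bar>v - u\<bar> * B" by (rule mult_left_mono[OF b]) simp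
    finally show ?thesis by (simp add: mult.commute)
  qed
  show ?thesis
  proof (cases t s rule: linorder_cases)
    case less then show ?thesis using *[OF less] by (simp add: abs_minus_commute)
  next
    case greater then show ?thesis using *[OF greater] by simp
  qed simp
qed

lemma deriv_under_int:
  fixes k k' :: "real \<Rightarrow> 'a \<Rightarrow> real"
  assumes meas: "\<And>h. k h \<in> borel_measurable M" "\<And>h. k' h \<in> borel_measurable M"
    and w: "integrable M w"
    and int0: "integrable M (k 0)"
    and d: "\<And>h y. y \<in> space M \<Longrightarrow> DERIV (\<lambda>h. k h y) h :> k' h y"
    and b: "\<And>h y. y \<in> space M \<Longrightarrow> \<bar>k' h y\<bar> \<le> w y"
  shows "DERIV (\<lambda>h. \<integral>y. k h y \<partial>M) 0 :> (\<integral>y. k' 0 y \<partial>M)"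
proof -
  have lip: "\<bar>k t y - k 0 y\<bar> \<le> w y * \<bar>t\<bar>" if "y \<in> space M" for t y
    using lipschitz_deriv[of "\<lambda>h. k h y" "\<lambda>h. k' h y" "w y" t 0] d[OF that] b[OF that] by simp
  have intk: "integrable M (k t)" for t
  proof -
    have "integrable M (\<lambda>y. k 0 y + (k t y - k 0 y))"
    proof (rule Bochner_Integration.integrable_add[OF int0], rule Bochner_Integration.integrable_bound)
      show "integrable M (\<lambda>y. w y * \<bar>t\<bar>)" using w by simp
      show "AE y in M. norm (k t y - k 0 y) \<le> norm (w y * \<bar>t\<bar>)"
        using lip by (auto intro!: AE_I2 order_trans[OF _ abs_ge_self])
    qed (use meas in auto)
    then show ?thesis by simp
  qed
  show ?thesis unfolding DERIV_def
  proof (subst tendsto_at_iff_sequentially, intro allI impI)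
    fix X :: "nat \<Rightarrow> real" assume X0: "\<forall>i. X i \<in> UNIV - {0}" and X: "X \<longlonglongrightarrow> 0"
    have eq: "((\<lambda>h. ((\<integral>y. k (0 + h) y \<partial>M) - (\<integral>y. k 0 y \<partial>M)) / h) \<circ> X) i
       = (\<integral>y. (k (X i) y - k 0 y) / X i \<partial>M)" for i
      using intk by (simp add: Bochner_Integration.integral_diff)
    show "((\<lambda>h. ((\<integral>y. k (0 + h) y \<partial>M) - (\<integral>y. k 0 y \<partial>M)) / h) \<circ> X) \<longlonglongrightarrow> (\<integral>y. k' 0 y \<partial>M)"
      unfolding eq
    proof (rule integral_dominated_convergence[where w=w])
      show "AE y in M. (\<lambda>i. (k (X i) y - k 0 y) / X i) \<longlonglongrightarrow> k' 0 y"
      proof (rule AE_I2)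
        fix y assume y: "y \<in> space M"
        have "((\<lambda>h. (k (0 + h) y - k 0 y) / h) \<longlongrightarrow> k' 0 y) (at 0)"
          using d[OF y, of 0] unfolding DERIV_def .
        then have "((\<lambda>h. (k (0 + h) y - k 0 y) / h) \<circ> X) \<longlonglongrightarrow> k' 0 y"
          using X0 X by (subst (asm) tendsto_at_iff_sequentially) blast
        then show "(\<lambda>i. (k (X i) y - k 0 y) / X i) \<longlonglongrightarrow> k' 0 y" by (simp add: comp_def)
      qed
      show "AE y in M. norm ((k (X i) y - k 0 y) / X i) \<le> w y" for i
      proof (rule AE_I2)
        fix y assume y: "y \<in> space M"
        have "X i \<noteq> 0" using X0 by auto
        then show "norm ((k (X i) y - k 0 y) / X i) \<le> w y"
          using lip[OF y, of "X i"] by (simp add: divide_simps abs_divide)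
      qed
    qed (use meas w in auto)
  qed
qed

lemma powr_int:
  fixes a c :: real assumes a: "a > -1" and c: "c > 0"
  shows "set_integrable lborel {0<..<c} (\<lambda>x. x powr a)"
    and "(LINT x:{0<..<c}|lborel. x powr a) = c powr (a+1) / (a+1)"
proof -
  have hi: "((\<lambda>x. x powr a) has_integral (c powr (a+1) / (a+1))) {0<..<c}"
    using has_integral_powr_from_0[OF a, of c] c has_integral_open_interval[of "\<lambda>x. x powr a" _ 0 c]
    by simp
  then have "(\<lambda>x. x powr a) integrable_on {0<..<c}" by blast
  then have "(\<lambda>x. x powr a) absolutely_integrable_on {0<..<c}"
    by (rule nonnegative_absolutely_integrable_1) simp
  then have sl: "set_integrable lebesgue {0<..<c} (\<lambda>x. x powr a)" .
  have m: "(\<lambda>x. indicator {0<..<c} x *\<^sub>R x powr a) \<in> borel_measurable lborel" by measurable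
  show si: "set_integrable lborel {0<..<c} (\<lambda>x. x powr a)"
    using sl m unfolding set_integrable_def by (simp add: integrable_completion)
  have "(LINT x:{0<..<c}|lebesgue. x powr a) = c powr (a+1) / (a+1)"
    using has_integral_set_lebesgue[OF sl] hi has_integral_unique by blast
  then show "(LINT x:{0<..<c}|lborel. x powr a) = c powr (a+1) / (a+1)"
    using m unfolding set_lebesgue_integral_def by (simp add: integral_completion)
qed

lemma cont_param_int:
  fixes f :: "'p::metric_space \<Rightarrow> 'a \<Rightarrow> real"
  assumes meas: "\<And>x. f x \<in> borel_measurable M"
    and w: "integrable M w"
    and b: "\<And>x y. y \<in> space M \<Longrightarrow> \<bar>f x y\<bar> \<le> w y"
    and c: "\<And>y. y \<in> space M \<Longrightarrow> continuous_on UNIV (\<lambda>x. f x y)"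
  shows "continuous_on UNIV (\<lambda>x. \<integral>y. f x y \<partial>M)"
  unfolding continuous_on_sequentially
proof (intro allI ballI impI, elim conjE)
  fix X :: "nat \<Rightarrow> 'p" and x0 assume "X \<longlonglongrightarrow> x0"
  then have lim: "\<And>y. y \<in> space M \<Longrightarrow> (\<lambda>i. f (X i) y) \<longlonglongrightarrow> f x0 y"
  proof -
    fix y assume y: "y \<in> space M"
    have "isCont (\<lambda>x. f x y) x0" using c[OF y] by (simp add: continuous_on_eq_continuous_at)
    then show "(\<lambda>i. f (X i) y) \<longlonglongrightarrow> f x0 y" using isCont_tendsto_compose \<open>X \<longlonglongrightarrow> x0\<close> by blast
  qed
  show "((\<lambda>x. \<integral>y. f x y \<partial>M) \<circ> X) \<longlonglongrightarrow> (\<integral>y. f x0 y \<partial>M)"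
    unfolding comp_def
    by (rule integral_dominated_convergence[where w=w]) (use meas w b lim in \<open>auto intro!: AE_I2\<close>)
qed



lemma deriv_normsq:
  fixes x a :: "'a::real_inner"
  shows "DERIV (\<lambda>h. (norm (x + h *\<^sub>R a))\<^sup>2) h :> 2 * (a \<bullet> (x + h *\<^sub>R a))"
proof -
  have e: "(norm (x + h *\<^sub>R a))\<^sup>2 = x \<bullet> x + 2 * h * (a \<bullet> x) + h\<^sup>2 * (a \<bullet> a)" for h
    unfolding power2_norm_eq_inner by (simp add: inner_add_left inner_add_right inner_commute algebra_simps power2_eq_square)
  show ?thesis unfolding e
    by (auto intro!: derivative_eq_intros simp: inner_add_right algebra_simps)
qed

lemma deriv_gauss_lin:
  fixes x a :: "'a::real_inner"
  shows "DERIV (\<lambda>h. (a \<bullet> (x + h *\<^sub>R a)) * exp (- g * (norm (x + h *\<^sub>R a))\<^sup>2)) h :>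
     ((a \<bullet> a) - 2 * g * (a \<bullet> (x + h *\<^sub>R a))\<^sup>2) * exp (- g * (norm (x + h *\<^sub>R a))\<^sup>2)"
proof -
  have d1: "DERIV (\<lambda>h. a \<bullet> (x + h *\<^sub>R a)) h :> a \<bullet> a"
    unfolding inner_add_right inner_scaleR_right by (auto intro!: derivative_eq_intros)
  show ?thesis
    by (rule DERIV_cong[OF DERIV_mult[OF d1 DERIV_chain2[OF DERIV_exp DERIV_cmult[OF deriv_normsq]]]])
      (simp add: algebra_simps power2_eq_square)
qed

lemma dd_gauss:
  fixes a y :: "'a::real_inner"
  shows "deriv (\<lambda>h. C * exp (- g * (norm (y + h *\<^sub>R a))\<^sup>2)) 0 = - (a \<bullet> y) * (2 * g * C * exp (- g * (norm y)\<^sup>2))"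
proof (rule DERIV_imp_deriv)
  show "DERIV (\<lambda>h. C * exp (- g * (norm (y + h *\<^sub>R a))\<^sup>2)) 0 :> - (a \<bullet> y) * (2 * g * C * exp (- g * (norm y)\<^sup>2))"
    by (rule DERIV_cong[OF DERIV_cmult[OF DERIV_chain2[OF DERIV_exp DERIV_cmult[OF deriv_normsq]]]]) simp
qed

lemma exp_powr': "exp u powr p = exp (u * p)" for u :: real
  by (simp add: powr_def mult.commute del: exp_ln_iff)

lemma hk_powr:
  assumes s: "s > 0"
  shows "heat_kernel s (z::real^'n) powr p =
    (4 * pi * s) powr (- (real CARD('n) / 2) * p) * exp (- (p / (4 * s)) * (norm z)\<^sup>2)"
  unfolding heat_kernel_def using s
  by (simp add: powr_mult powr_powr exp_powr')

lemma hk_alt: "heat_kernel t (z::real^'n) = (4 * pi * t) powr (- (real CARD('n) / 2)) * exp (- (1 / (4 * t)) * (norm z)\<^sup>2)"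
  unfolding heat_kernel_def by simp

lemma inner_heat:
  fixes y :: "real^'n"
  assumes t: "t > 0" and s: "s > 0" and p: "p > 0"
  shows "heat_sg t (\<lambda>z. heat_kernel s z powr p) y =
     (4 * pi * t) powr (- (real CARD('n) / 2)) * (4 * pi * s) powr (- (real CARD('n) / 2) * p) *
     (sqrt pi ^ CARD('n) * (1 / (4 * t) + p / (4 * s)) powr (- real CARD('n) / 2) *
      exp (- (1 / (4 * t) * (p / (4 * s)) / (1 / (4 * t) + p / (4 * s))) * (norm y)\<^sup>2))"
proof -
  let ?c = "(4 * pi * t) powr (- (real CARD('n) / 2)) * (4 * pi * s) powr (- (real CARD('n) / 2) * p)"
  have e: "heat_kernel t (y - z) * heat_kernel s z powr p =
     ?c * exp (- (1 / (4 * t)) * (norm (y - z))\<^sup>2 - (p / (4 * s)) * (norm z)\<^sup>2)" for z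
    unfolding hk_powr[OF s] hk_alt[of t] by (simp add: exp_diff exp_minus field_simps)
  have "has_bochner_integral lborel (\<lambda>z. exp (- (1 / (4 * t)) * (norm (y - z))\<^sup>2 - (p / (4 * s)) * (norm z)\<^sup>2))
     (sqrt pi ^ DIM(real^'n) * (1 / (4 * t) + p / (4 * s)) powr (- real DIM(real^'n) / 2) *
      exp (- (1 / (4 * t) * (p / (4 * s)) / (1 / (4 * t) + p / (4 * s))) * (norm y)\<^sup>2))"
    by (rule conv0) (use t s p in auto)
  then show ?thesis
    unfolding heat_sg_def e by (simp add: has_bochner_integral_iff)
qed

lemma const1:
  fixes N Z :: real
  assumes t: "t > 0" and s: "s > 0" and p: "p > 0"
  shows "(4 * pi * t) powr (- (N / 2)) * (4 * pi * s) powr (- (N / 2) * p) *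
     (Z * (1 / (4 * t) + p / (4 * s)) powr (- N / 2)) =
     Z * (4 * pi) powr (- N * p / 2) * pi powr (- N / 2) * s powr (- (N * (p - 1) / 2)) * (s + p * t) powr (- N / 2)"
proof -
  have u: "s + p * t > 0" using s t p by (simp add: add_pos_pos)
  have "(4 * pi * t) powr (- (N / 2)) * (1 / (4 * t) + p / (4 * s)) powr (- N / 2) =
      (4 * pi * t * (1 / (4 * t) + p / (4 * s))) powr (- N / 2)"
    using t s p by (simp add: powr_mult)
  also have "4 * pi * t * (1 / (4 * t) + p / (4 * s)) = pi * (s + p * t) / s"
    using t s by (simp add: field_simps)
  also have "(pi * (s + p * t) / s) powr (- N / 2) = pi powr (- N / 2) * (s + p * t) powr (- N / 2) * s powr (N / 2)"
    using s u by (simp add: powr_divide powr_mult powr_minus_divide divide_simps)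
  finally have 1: "(4 * pi * t) powr (- (N / 2)) * (1 / (4 * t) + p / (4 * s)) powr (- N / 2) =
     pi powr (- N / 2) * (s + p * t) powr (- N / 2) * s powr (N / 2)" .
  have 2: "(4 * pi * s) powr (- (N / 2) * p) = (4 * pi) powr (- N * p / 2) * s powr (- (N / 2) * p)"
    using s by (simp add: powr_mult)
  have 3: "s powr (- (N / 2) * p) * s powr (N / 2) = s powr (- (N * (p - 1) / 2))"
  proof -
    have "- (N / 2) * p + N / 2 = - (N * (p - 1) / 2)" by (simp add: field_simps)
    then show ?thesis by (simp add: powr_add[symmetric])
  qed
  have "(4 * pi * t) powr (- (N / 2)) * (4 * pi * s) powr (- (N / 2) * p) *
     (Z * (1 / (4 * t) + p / (4 * s)) powr (- N / 2)) =
     Z * (4 * pi * s) powr (- (N / 2) * p) * ((4 * pi * t) powr (- (N / 2)) * (1 / (4 * t) + p / (4 * s)) powr (- N / 2))"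
    by (simp add: mult_ac)
  also have "\<dots> = Z * (4 * pi) powr (- N * p / 2) * pi powr (- N / 2) * (s powr (- (N / 2) * p) * s powr (N / 2)) * (s + p * t) powr (- N / 2)"
    unfolding 1 2 by (simp add: mult_ac)
  finally show ?thesis unfolding 3 .
qed

lemma const1g:
  fixes t s p :: real
  assumes t: "t > 0" and s: "s > 0" and p: "p > 0"
  shows "1 / (4 * t) * (p / (4 * s)) / (1 / (4 * t) + p / (4 * s)) = p / (4 * (s + p * t))"
  using t s p by (simp add: field_simps)

definition K1 :: "real \<Rightarrow> real \<Rightarrow> real \<Rightarrow> real" where
  "K1 N Z p = Z * (4 * pi) powr (- N * p / 2) * pi powr (- N / 2)"
definition uu :: "real \<Rightarrow> real \<Rightarrow> real \<Rightarrow> real" where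
  "uu p \<theta> \<tau> = \<tau> + p * (\<theta> - \<tau>)"
definition gg :: "real \<Rightarrow> real \<Rightarrow> real \<Rightarrow> real" where
  "gg p \<theta> \<tau> = p / (4 * uu p \<theta> \<tau>)"
definition AA :: "real \<Rightarrow> real \<Rightarrow> real \<Rightarrow> real \<Rightarrow> real \<Rightarrow> real" where
  "AA N Z p \<theta> \<tau> = 2 * gg p \<theta> \<tau> * (K1 N Z p * \<tau> powr (- (N * (p - 1) / 2)) * uu p \<theta> \<tau> powr (- N / 2))"

lemma inner_heat2:
  fixes y :: "real^'n"
  assumes "0 < \<tau>" "\<tau> < \<theta>" "p > 0"
  shows "heat_sg (\<theta> - \<tau>) (\<lambda>z. heat_kernel \<tau> z powr p) y =
    (K1 (real CARD('n)) (sqrt pi ^ CARD('n)) p * \<tau> powr (- (real CARD('n) * (p - 1) / 2)) * uu p \<theta> \<tau> powr (- real CARD('n) / 2))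
    * exp (- gg p \<theta> \<tau> * (norm y)\<^sup>2)"
proof -
  have t: "\<theta> - \<tau> > 0" using assms by simp
  let ?N = "real CARD('n)" and ?Z = "sqrt pi ^ CARD('n)"
  have "heat_sg (\<theta> - \<tau>) (\<lambda>z. heat_kernel \<tau> z powr p) y =
    ((4 * pi * (\<theta> - \<tau>)) powr (- (?N / 2)) * (4 * pi * \<tau>) powr (- (?N / 2) * p) *
     (?Z * (1 / (4 * (\<theta> - \<tau>)) + p / (4 * \<tau>)) powr (- ?N / 2))) *
    exp (- (1 / (4 * (\<theta> - \<tau>)) * (p / (4 * \<tau>)) / (1 / (4 * (\<theta> - \<tau>)) + p / (4 * \<tau>))) * (norm y)\<^sup>2)"
    unfolding inner_heat[OF t assms(1,3)] by (simp only: mult.assoc)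
  then show ?thesis
    unfolding const1[OF t assms(1,3)] const1g[OF t assms(1,3)] by (simp add: K1_def uu_def gg_def)
qed

lemma inner_dd:
  fixes y a :: "real^'n"
  assumes "0 < \<tau>" "\<tau> < \<theta>" "p > 0"
  shows "dir_deriv a (heat_sg (\<theta> - \<tau>) (\<lambda>z. heat_kernel \<tau> z powr p)) y =
    - (a \<bullet> y) * (AA (real CARD('n)) (sqrt pi ^ CARD('n)) p \<theta> \<tau> * exp (- gg p \<theta> \<tau> * (norm y)\<^sup>2))"
  unfolding dir_deriv_def inner_heat2[OF assms] dd_gauss AA_def by (simp add: mult_ac)

lemma inner_int:
  fixes y a :: "real^'n"
  assumes "p > 0"
  shows "(LINT \<tau>:{0<..<\<theta>}|lborel. dir_deriv a (heat_sg (\<theta> - \<tau>) (\<lambda>z. heat_kernel \<tau> z powr p)) y) =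
    - (a \<bullet> y) * (LINT \<tau>:{0<..<\<theta>}|lborel. AA (real CARD('n)) (sqrt pi ^ CARD('n)) p \<theta> \<tau> * exp (- gg p \<theta> \<tau> * (norm y)\<^sup>2))"
proof -
  have "(LINT \<tau>:{0<..<\<theta>}|lborel. dir_deriv a (heat_sg (\<theta> - \<tau>) (\<lambda>z. heat_kernel \<tau> z powr p)) y) =
    (LINT \<tau>:{0<..<\<theta>}|lborel. - (a \<bullet> y) * (AA (real CARD('n)) (sqrt pi ^ CARD('n)) p \<theta> \<tau> * exp (- gg p \<theta> \<tau> * (norm y)\<^sup>2)))"
    by (rule set_lebesgue_integral_cong) (use assms inner_dd in \<open>auto simp del: mult_minus_left\<close>)
  then show ?thesis by (simp only: set_integral_mult_right)
qed



lemma uu_ge: "p \<ge> 1 \<Longrightarrow> 0 < \<tau> \<Longrightarrow> \<tau> < \<theta> \<Longrightarrow> \<theta> \<le> uu p \<theta> \<tau>"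
proof -
  assume "p \<ge> 1" "0 < \<tau>" "\<tau> < \<theta>"
  then have "1 * (\<theta> - \<tau>) \<le> p * (\<theta> - \<tau>)" by (intro mult_right_mono) auto
  then show ?thesis unfolding uu_def by simp
qed

lemma uu_le: "p \<ge> 1 \<Longrightarrow> 0 < \<tau> \<Longrightarrow> \<tau> < \<theta> \<Longrightarrow> uu p \<theta> \<tau> \<le> p * \<theta>"
  unfolding uu_def using mult_right_mono[of 1 p "\<tau>"] by (simp add: algebra_simps)

lemma K1_pos: "Z > 0 \<Longrightarrow> K1 N Z p > 0"
  unfolding K1_def by simp

lemma gg_pos: "p \<ge> 1 \<Longrightarrow> 0 < \<tau> \<Longrightarrow> \<tau> < \<theta> \<Longrightarrow> gg p \<theta> \<tau> > 0"
  unfolding gg_def using uu_ge[of p \<tau> \<theta>] by simp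

lemma gg_ge: "p \<ge> 1 \<Longrightarrow> 0 < \<tau> \<Longrightarrow> \<tau> < \<theta> \<Longrightarrow> 1 / (4 * \<theta>) \<le> gg p \<theta> \<tau>"
  unfolding gg_def using uu_le[of p \<tau> \<theta>] uu_ge[of p \<tau> \<theta>]
  by (simp add: divide_simps)

lemma gg_le: "p \<ge> 1 \<Longrightarrow> 0 < \<tau> \<Longrightarrow> \<tau> < \<theta> \<Longrightarrow> gg p \<theta> \<tau> \<le> p / (4 * \<theta>)"
  unfolding gg_def using uu_ge[of p \<tau> \<theta>]
  by (intro divide_left_mono) auto

lemma AA_pos: "Z > 0 \<Longrightarrow> p \<ge> 1 \<Longrightarrow> 0 < \<tau> \<Longrightarrow> \<tau> < \<theta> \<Longrightarrow> AA N Z p \<theta> \<tau> > 0"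
  unfolding AA_def using gg_pos[of p \<tau> \<theta>] K1_pos[of Z N p] uu_ge[of p \<tau> \<theta>] by simp

lemma AA_le:
  assumes "Z > 0" "p \<ge> 1" "0 < \<tau>" "\<tau> < \<theta>" "N \<ge> 0"
  shows "AA N Z p \<theta> \<tau> \<le> 2 * (p / (4 * \<theta>)) * K1 N Z p * \<theta> powr (- N / 2) * \<tau> powr (- (N * (p - 1) / 2))"
proof -
  have "uu p \<theta> \<tau> powr (- N / 2) \<le> \<theta> powr (- N / 2)"
    by (rule powr_mono2') (use assms uu_ge[of p \<tau> \<theta>] in auto)
  then have "K1 N Z p * \<tau> powr (- (N * (p - 1) / 2)) * uu p \<theta> \<tau> powr (- N / 2) \<le>
      K1 N Z p * \<tau> powr (- (N * (p - 1) / 2)) * \<theta> powr (- N / 2)"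
    using K1_pos[of Z N p] assms by (intro mult_left_mono) auto
  moreover have "2 * gg p \<theta> \<tau> \<le> 2 * (p / (4 * \<theta>))" using gg_le[of p \<tau> \<theta>] assms by simp
  ultimately have "2 * gg p \<theta> \<tau> * (K1 N Z p * \<tau> powr (- (N * (p - 1) / 2)) * uu p \<theta> \<tau> powr (- N / 2)) \<le>
     2 * (p / (4 * \<theta>)) * (K1 N Z p * \<tau> powr (- (N * (p - 1) / 2)) * \<theta> powr (- N / 2))"
    using gg_pos[of p \<tau> \<theta>] K1_pos[of Z N p] assms by (intro mult_mono) auto
  then show ?thesis unfolding AA_def by (simp add: mult_ac)
qed

lemma AA_meas[measurable]: "(\<lambda>z. AA N Z p (f z) (g z)) \<in> borel_measurable M"
  if [measurable]: "f \<in> borel_measurable M" "g \<in> borel_measurable M"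
  unfolding AA_def gg_def uu_def K1_def by measurable

lemma AA_int:
  assumes Z: "Z > 0" and p: "p \<ge> 1" and N: "N \<ge> 0" and th: "\<theta> > 0" and q: "N * (p - 1) / 2 < 1"
  shows "set_integrable lborel {0<..<\<theta>} (\<lambda>\<tau>. AA N Z p \<theta> \<tau>)"
  unfolding set_integrable_def
proof (rule Bochner_Integration.integrable_bound)
  let ?C = "2 * (p / (4 * \<theta>)) * K1 N Z p * \<theta> powr (- N / 2)"
  have "set_integrable lborel {0<..<\<theta>} (\<lambda>\<tau>. \<tau> powr (- (N * (p - 1) / 2)))"
    by (rule powr_int) (use q th in auto)
  then show "integrable lborel (\<lambda>\<tau>. ?C * (indicator {0<..<\<theta>} \<tau> *\<^sub>R \<tau> powr (- (N * (p - 1) / 2))))"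
    unfolding set_integrable_def by simp
  show "AE \<tau> in lborel. norm (indicator {0<..<\<theta>} \<tau> *\<^sub>R AA N Z p \<theta> \<tau>) \<le>
      norm (?C * (indicator {0<..<\<theta>} \<tau> *\<^sub>R \<tau> powr (- (N * (p - 1) / 2))))"
  proof (rule AE_I2)
    fix \<tau> :: real
    show "norm (indicator {0<..<\<theta>} \<tau> *\<^sub>R AA N Z p \<theta> \<tau>) \<le>
      norm (?C * (indicator {0<..<\<theta>} \<tau> *\<^sub>R \<tau> powr (- (N * (p - 1) / 2))))"
    proof (cases "\<tau> \<in> {0<..<\<theta>}")
      case True
      then show ?thesis using AA_le[OF Z p _ _ N, of \<tau> \<theta>] AA_pos[OF Z p, of \<tau> \<theta> N] K1_pos[OF Z, of N p] th p
        by (simp add: abs_mult mult_ac)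
    qed simp
  qed
qed measurable



definition bb :: "real \<Rightarrow> real \<Rightarrow> real \<Rightarrow> real" where
  "bb p \<theta> \<tau> = (p - 1) / (4 * \<theta>) + gg p \<theta> \<tau>"
definition al :: "real \<Rightarrow> real" where
  "al \<theta> = 1 / (4 * (1 - \<theta>))"
definition c0 :: "real \<Rightarrow> real \<Rightarrow> real \<Rightarrow> real" where
  "c0 N p \<theta> = (4 * pi * (1 - \<theta>)) powr (- (N / 2)) * (4 * pi * \<theta>) powr (- (N / 2) * (p - 1))"
definition EE :: "real \<Rightarrow> real \<Rightarrow> real \<Rightarrow> real \<Rightarrow> real \<Rightarrow> real" where
  "EE N Z p \<theta> \<tau> = c0 N p \<theta> * AA N Z p \<theta> \<tau> *
     (al \<theta> / (al \<theta> + bb p \<theta> \<tau>) * Z * (al \<theta> + bb p \<theta> \<tau>) powr (- N / 2))"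
definition dd :: "real \<Rightarrow> real \<Rightarrow> real \<Rightarrow> real" where
  "dd p \<theta> \<tau> = al \<theta> * bb p \<theta> \<tau> / (al \<theta> + bb p \<theta> \<tau>)"

lemma bb_meas[measurable]: "(\<lambda>z. bb p (f z) (g z)) \<in> borel_measurable M"
  if [measurable]: "f \<in> borel_measurable M" "g \<in> borel_measurable M"
  unfolding bb_def gg_def uu_def by measurable

lemma EE_meas[measurable]: "(\<lambda>z. EE N Z p (f z) (g z)) \<in> borel_measurable M"
  if [measurable]: "f \<in> borel_measurable M" "g \<in> borel_measurable M"
  unfolding EE_def c0_def al_def by measurable

lemma dd_meas[measurable]: "(\<lambda>z. dd p (f z) (g z)) \<in> borel_measurable M"
  if [measurable]: "f \<in> borel_measurable M" "g \<in> borel_measurable M"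
  unfolding dd_def al_def by measurable

lemma outer:
  fixes a x :: "real^'n"
  assumes p: "p > 1" and q: "real CARD('n) * (p - 1) / 2 < 1" and th0: "0 < \<theta>" and th1: "\<theta> < 1"
  shows "heat_sg (1 - \<theta>) (\<lambda>y. heat_kernel \<theta> y powr (p - 1) *
      (- (a \<bullet> y) * (LINT \<tau>:{0<..<\<theta>}|lborel. AA (real CARD('n)) (sqrt pi ^ CARD('n)) p \<theta> \<tau> * exp (- gg p \<theta> \<tau> * (norm y)\<^sup>2)))) x
    = (LINT \<tau>:{0<..<\<theta>}|lborel. - (a \<bullet> x) * EE (real CARD('n)) (sqrt pi ^ CARD('n)) p \<theta> \<tau> * exp (- dd p \<theta> \<tau> * (norm x)\<^sup>2))"
proof -
  define N where "N = real CARD('n)"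
  define Z where "Z = sqrt pi ^ CARD('n)"
  have Z: "Z > 0" unfolding Z_def by simp
  have N: "N \<ge> 0" unfolding N_def by simp
  let ?S = "{0<..<\<theta>} :: real set"
  define F where "F \<tau> y = indicator ?S \<tau> * (c0 N p \<theta> * AA N Z p \<theta> \<tau> * (- (a \<bullet> y) *
      exp (- al \<theta> * (norm (x - y))\<^sup>2 - bb p \<theta> \<tau> * (norm y)\<^sup>2)))" for \<tau> and y :: "real^'n"
  have alpos: "al \<theta> > 0" unfolding al_def using th1 by simp
  have bbpos: "bb p \<theta> \<tau> > 0" if "\<tau> \<in> ?S" for \<tau>
    unfolding bb_def using gg_pos[of p \<tau> \<theta>] that p th0 by (auto intro!: add_nonneg_pos)
  have step1: "heat_kernel (1 - \<theta>) (x - y) * (heat_kernel \<theta> y powr (p - 1) *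
      (- (a \<bullet> y) * (LINT \<tau>:?S|lborel. AA N Z p \<theta> \<tau> * exp (- gg p \<theta> \<tau> * (norm y)\<^sup>2))))
      = (\<integral>\<tau>. F \<tau> y \<partial>lborel)" for y
  proof -
    have e: "heat_kernel (1 - \<theta>) (x - y) * (heat_kernel \<theta> y powr (p - 1) * (- (a \<bullet> y) *
        (indicator ?S \<tau> *\<^sub>R (AA N Z p \<theta> \<tau> * exp (- gg p \<theta> \<tau> * (norm y)\<^sup>2))))) = F \<tau> y" for \<tau>
    proof -
      have "exp (- al \<theta> * (norm (x - y))\<^sup>2 - bb p \<theta> \<tau> * (norm y)\<^sup>2) =
          exp (- (1 / (4 * (1 - \<theta>))) * (norm (x - y))\<^sup>2) * exp (- ((p - 1) / (4 * \<theta>)) * (norm y)\<^sup>2) * exp (- gg p \<theta> \<tau> * (norm y)\<^sup>2)"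
        unfolding al_def bb_def by (simp add: exp_add[symmetric] algebra_simps)
      then show ?thesis
        unfolding F_def hk_alt[of "1 - \<theta>"] hk_powr[OF th0] c0_def N_def
        by (simp add: mult_ac)
    qed
    show ?thesis
      unfolding set_lebesgue_integral_def e[symmetric] N_def Z_def
      by (subst integral_mult_right_zero[symmetric])+ (rule refl)
  qed
  have hb: "has_bochner_integral lborel (\<lambda>y. F \<tau> y)
      (indicator ?S \<tau> * (- (a \<bullet> x) * EE N Z p \<theta> \<tau> * exp (- dd p \<theta> \<tau> * (norm x)\<^sup>2)))" for \<tau>
  proof (cases "\<tau> \<in> ?S")
    case True
    have "has_bochner_integral lborel (\<lambda>y. (a \<bullet> y) * exp (- al \<theta> * (norm (x - y))\<^sup>2 - bb p \<theta> \<tau> * (norm y)\<^sup>2))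
      (al \<theta> / (al \<theta> + bb p \<theta> \<tau>) * (a \<bullet> x) * (sqrt pi ^ DIM(real^'n) * (al \<theta> + bb p \<theta> \<tau>) powr (- real DIM(real^'n) / 2) *
        exp (- (al \<theta> * bb p \<theta> \<tau> / (al \<theta> + bb p \<theta> \<tau>)) * (norm x)\<^sup>2)))"
      by (rule conv1[OF alpos bbpos[OF True]])
    then have "has_bochner_integral lborel (\<lambda>y. (- (c0 N p \<theta> * AA N Z p \<theta> \<tau>)) * ((a \<bullet> y) * exp (- al \<theta> * (norm (x - y))\<^sup>2 - bb p \<theta> \<tau> * (norm y)\<^sup>2)))
      ((- (c0 N p \<theta> * AA N Z p \<theta> \<tau>)) * (al \<theta> / (al \<theta> + bb p \<theta> \<tau>) * (a \<bullet> x) * (sqrt pi ^ DIM(real^'n) * (al \<theta> + bb p \<theta> \<tau>) powr (- real DIM(real^'n) / 2) *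
        exp (- (al \<theta> * bb p \<theta> \<tau> / (al \<theta> + bb p \<theta> \<tau>)) * (norm x)\<^sup>2))))"
      by (rule has_bochner_integral_mult_right)
    then show ?thesis using True
      unfolding F_def EE_def dd_def N_def Z_def by (simp add: mult_ac)
  next
    case False
    then show ?thesis unfolding F_def by (simp add: has_bochner_integral_zero)
  qed
  have Fm: "(\<lambda>(\<tau>, y). F \<tau> y) \<in> borel_measurable (lborel \<Otimes>\<^sub>M lborel)"
    unfolding F_def by measurable
  have int: "integrable (lborel \<Otimes>\<^sub>M lborel) (\<lambda>(\<tau>, y). F \<tau> y)"
  proof (rule lborel_pair.Fubini_integrable)
    show "(\<lambda>(\<tau>, y). F \<tau> y) \<in> borel_measurable (lborel \<Otimes>\<^sub>M lborel)" by (rule Fm)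
    show "AE \<tau> in lborel. integrable lborel (\<lambda>y. case (\<tau>, y) of (\<tau>, y) \<Rightarrow> F \<tau> y)"
      using hb by (auto simp: has_bochner_integral_iff)
    define b0 where "b0 = (p - 1) / (4 * \<theta>)"
    have b0: "b0 > 0" unfolding b0_def using p th0 by simp
    define g0 where "g0 y = exp (- b0 * (norm (y - 0))\<^sup>2) + 2 / b0 * exp (- (b0 / 2) * (norm (y - 0))\<^sup>2)" for y :: "real^'n"
    have g0i: "integrable lborel g0"
      unfolding g0_def using gauss_shift_int[OF b0, of 0] gauss_shift_int[of "b0/2" 0] b0
      by (intro Bochner_Integration.integrable_add integrable_mult_right) auto
    define K0 where "K0 = integral\<^sup>L lborel g0"
    have c0pos: "c0 N p \<theta> > 0" unfolding c0_def using th0 th1 by simp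
    have bnd: "(\<integral>y. norm (F \<tau> y) \<partial>lborel) \<le> indicator ?S \<tau> * AA N Z p \<theta> \<tau> * (c0 N p \<theta> * norm a * K0)" for \<tau>
    proof (cases "\<tau> \<in> ?S")
      case True
      have "(\<integral>y. norm (F \<tau> y) \<partial>lborel) \<le> (\<integral>y. (AA N Z p \<theta> \<tau> * (c0 N p \<theta> * norm a)) * g0 y \<partial>lborel)"
      proof (rule integral_mono)
        show "integrable lborel (\<lambda>y. norm (F \<tau> y))" using hb[of \<tau>] by (auto simp: has_bochner_integral_iff)
        show "integrable lborel (\<lambda>y. (AA N Z p \<theta> \<tau> * (c0 N p \<theta> * norm a)) * g0 y)" using g0i by simp
        fix y :: "real^'n"
        have AA0: "AA N Z p \<theta> \<tau> > 0" using AA_pos[OF Z, of p \<tau> \<theta> N] True p by auto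
        have gg0: "gg p \<theta> \<tau> > 0" using gg_pos[of p \<tau> \<theta>] True p by auto
        have "exp (- al \<theta> * (norm (x - y))\<^sup>2 - bb p \<theta> \<tau> * (norm y)\<^sup>2) \<le> exp (- b0 * (norm y)\<^sup>2)"
        proof -
          have "b0 * (norm y)\<^sup>2 \<le> bb p \<theta> \<tau> * (norm y)\<^sup>2"
            unfolding bb_def b0_def using gg0 by (intro mult_right_mono) auto
          moreover have "0 \<le> al \<theta> * (norm (x - y))\<^sup>2" using alpos by simp
          ultimately show ?thesis by simp
        qed
        then have "\<bar>a \<bullet> y\<bar> * exp (- al \<theta> * (norm (x - y))\<^sup>2 - bb p \<theta> \<tau> * (norm y)\<^sup>2) \<le> (norm a * norm y) * exp (- b0 * (norm y)\<^sup>2)"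
          using Cauchy_Schwarz_ineq2[of a y] by (intro mult_mono) auto
        also have "\<dots> \<le> norm a * g0 y"
          unfolding mult.assoc g0_def using r_exp_bound[OF b0, of "norm y"] by (intro mult_left_mono) auto
        finally have "\<bar>a \<bullet> y\<bar> * exp (- al \<theta> * (norm (x - y))\<^sup>2 - bb p \<theta> \<tau> * (norm y)\<^sup>2) \<le> norm a * g0 y" .
        then have "(c0 N p \<theta> * AA N Z p \<theta> \<tau>) * (\<bar>a \<bullet> y\<bar> * exp (- al \<theta> * (norm (x - y))\<^sup>2 - bb p \<theta> \<tau> * (norm y)\<^sup>2))
            \<le> (c0 N p \<theta> * AA N Z p \<theta> \<tau>) * (norm a * g0 y)"
          using c0pos AA0 by (intro mult_left_mono) auto
        then show "norm (F \<tau> y) \<le> (AA N Z p \<theta> \<tau> * (c0 N p \<theta> * norm a)) * g0 y"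
          unfolding F_def using True c0pos AA0 by (simp add: abs_mult mult_ac)
      qed
      also have "\<dots> = indicator ?S \<tau> * AA N Z p \<theta> \<tau> * (c0 N p \<theta> * norm a * K0)"
        using True unfolding K0_def by (simp add: mult_ac)
      finally show ?thesis .
    next
      case False
      then show ?thesis unfolding F_def by simp
    qed
    show "integrable lborel (\<lambda>\<tau>. \<integral>y. norm (case (\<tau>, y) of (\<tau>, y) \<Rightarrow> F \<tau> y) \<partial>lborel)"
    proof (rule Bochner_Integration.integrable_bound)
      show "integrable lborel (\<lambda>\<tau>. indicator ?S \<tau> * AA N Z p \<theta> \<tau> * (c0 N p \<theta> * norm a * K0))"
        using AA_int[OF Z _ N th0, of p] p q unfolding set_integrable_def N_def by simp
      show "(\<lambda>\<tau>. \<integral>y. norm (case (\<tau>, y) of (\<tau>, y) \<Rightarrow> F \<tau> y) \<partial>lborel) \<in> borel_measurable lborel"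
        using Fm by measurable
      show "AE \<tau> in lborel. norm (\<integral>y. norm (case (\<tau>, y) of (\<tau>, y) \<Rightarrow> F \<tau> y) \<partial>lborel)
          \<le> norm (indicator ?S \<tau> * AA N Z p \<theta> \<tau> * (c0 N p \<theta> * norm a * K0))"
      proof (rule AE_I2)
        fix \<tau> :: real
        have "0 \<le> (\<integral>y. norm (F \<tau> y) \<partial>lborel)" by simp
        then show "norm (\<integral>y. norm (case (\<tau>, y) of (\<tau>, y) \<Rightarrow> F \<tau> y) \<partial>lborel)
          \<le> norm (indicator ?S \<tau> * AA N Z p \<theta> \<tau> * (c0 N p \<theta> * norm a * K0))"
          using bnd[of \<tau>] by simp
      qed
    qed
  qed
  have "heat_sg (1 - \<theta>) (\<lambda>y. heat_kernel \<theta> y powr (p - 1) *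
      (- (a \<bullet> y) * (LINT \<tau>:?S|lborel. AA N Z p \<theta> \<tau> * exp (- gg p \<theta> \<tau> * (norm y)\<^sup>2)))) x
     = (\<integral>y. (\<integral>\<tau>. F \<tau> y \<partial>lborel) \<partial>lborel)"
    unfolding heat_sg_def step1 ..
  also have "\<dots> = (\<integral>\<tau>. (\<integral>y. F \<tau> y \<partial>lborel) \<partial>lborel)"
    by (rule lborel_pair.Fubini_integral[OF int])
  also have "\<dots> = (\<integral>\<tau>. indicator ?S \<tau> * (- (a \<bullet> x) * EE N Z p \<theta> \<tau> * exp (- dd p \<theta> \<tau> * (norm x)\<^sup>2)) \<partial>lborel)"
    using hb by (simp add: has_bochner_integral_iff)
  finally show ?thesis unfolding set_lebesgue_integral_def N_def Z_def by simp
qed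

lemma EE_alt:
  assumes Z: "Z > 0" and p: "p \<ge> 1" and t: "0 < \<tau>" "\<tau> < \<theta>" and th1: "\<theta> < 1"
  defines "v \<equiv> 1 + 4 * (1 - \<theta>) * bb p \<theta> \<tau>"
  shows "EE N Z p \<theta> \<tau> = (4 * pi * \<theta>) powr (- (N * (p - 1) / 2)) * AA N Z p \<theta> \<tau> * Z * (pi * v) powr (- N / 2) * (1 / v)"
    and "v \<ge> 1 / \<theta>"
proof -
  have th0: "\<theta> > 0" using t by simp
  have gg: "gg p \<theta> \<tau> \<ge> 1 / (4 * \<theta>)" using gg_ge[OF p t] .
  have bb: "bb p \<theta> \<tau> \<ge> 1 / (4 * \<theta>)" unfolding bb_def using gg p th0 by (smt (verit) divide_nonneg_pos)
  have "4 * (1 - \<theta>) * bb p \<theta> \<tau> \<ge> 4 * (1 - \<theta>) * (1 / (4 * \<theta>))"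
    using bb th1 by (intro mult_left_mono) auto
  moreover have "4 * (1 - \<theta>) * (1 / (4 * \<theta>)) = (1 - \<theta>) / \<theta>" using th0 by (simp add: field_simps)
  ultimately have "4 * (1 - \<theta>) * bb p \<theta> \<tau> \<ge> (1 - \<theta>) / \<theta>" by linarith
  then have "v \<ge> 1 + (1 - \<theta>) / \<theta>" unfolding v_def by simp
  also have "1 + (1 - \<theta>) / \<theta> = 1 / \<theta>" using th0 by (simp add: field_simps)
  finally show vge: "v \<ge> 1 / \<theta>" .
  have v0: "v > 0" using vge th0 by (smt (verit) divide_pos_pos)
  have e1: "al \<theta> + bb p \<theta> \<tau> = v / (4 * (1 - \<theta>))" unfolding v_def al_def using th1 by (simp add: field_simps)
  have e2: "al \<theta> / (al \<theta> + bb p \<theta> \<tau>) = 1 / v" unfolding e1 al_def using th1 v0 by (simp add: field_simps v_def)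
  have e3: "(4 * pi * (1 - \<theta>)) powr (- (N / 2)) * (al \<theta> + bb p \<theta> \<tau>) powr (- N / 2) = (pi * v) powr (- N / 2)"
  proof -
    have "(4 * pi * (1 - \<theta>)) powr (- (N / 2)) * (al \<theta> + bb p \<theta> \<tau>) powr (- N / 2) =
        (4 * pi * (1 - \<theta>) * (al \<theta> + bb p \<theta> \<tau>)) powr (- N / 2)"
      unfolding minus_divide_left[symmetric]
      by (rule powr_mult[symmetric]; use th1 v0 in \<open>auto simp: e1\<close>)
    also have "4 * pi * (1 - \<theta>) * (al \<theta> + bb p \<theta> \<tau>) = pi * v" unfolding e1 using th1 by (simp add: field_simps)
    finally show ?thesis .
  qed
  have e4: "(4 * pi * \<theta>) powr (- (N / 2) * (p - 1)) = (4 * pi * \<theta>) powr (- (N * (p - 1) / 2))"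
    by (simp add: algebra_simps)
  show "EE N Z p \<theta> \<tau> = (4 * pi * \<theta>) powr (- (N * (p - 1) / 2)) * AA N Z p \<theta> \<tau> * Z * (pi * v) powr (- N / 2) * (1 / v)"
    unfolding EE_def c0_def e2 e3[symmetric] e4 by (simp add: mult_ac)
qed

definition KE :: "real \<Rightarrow> real \<Rightarrow> real \<Rightarrow> real" where
  "KE N Z p = (4 * pi) powr (- (N * (p - 1) / 2)) * (p / 2) * K1 N Z p * Z * pi powr (- N / 2)"

lemma EE_bounds:
  assumes Z: "Z > 0" and p: "p \<ge> 1" and N: "N \<ge> 0" and t: "0 < \<tau>" "\<tau> < \<theta>" and th1: "\<theta> < 1"
  shows "EE N Z p \<theta> \<tau> > 0"
    and "EE N Z p \<theta> \<tau> \<le> KE N Z p * \<theta> powr (- (N * (p - 1) / 2)) * \<tau> powr (- (N * (p - 1) / 2))"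
proof -
  define v where "v = 1 + 4 * (1 - \<theta>) * bb p \<theta> \<tau>"
  have th0: "\<theta> > 0" using t by simp
  have ea1: "EE N Z p \<theta> \<tau> = (4 * pi * \<theta>) powr (- (N * (p - 1) / 2)) * AA N Z p \<theta> \<tau> * Z * (pi * v) powr (- N / 2) * (1 / v)"
    unfolding v_def by (rule EE_alt(1)[OF Z p t th1])
  have ea2: "v \<ge> 1 / \<theta>" unfolding v_def by (rule EE_alt(2)[OF Z p t th1])
  note ea = ea1 ea2
  have v0: "v > 0" using ea(2) th0 by (smt (verit) divide_pos_pos)
  have AA0: "AA N Z p \<theta> \<tau> > 0" using AA_pos[OF Z p t] .
  show "EE N Z p \<theta> \<tau> > 0" unfolding ea(1) using AA0 Z v0 th0 by simp
  have b1: "(pi * v) powr (- N / 2) \<le> pi powr (- N / 2) * \<theta> powr (N / 2)"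
  proof -
    have "(pi * v) powr (- N / 2) \<le> (pi * (1 / \<theta>)) powr (- N / 2)"
      by (rule powr_mono2') (use N th0 mult_left_mono[OF ea(2), of pi] in auto)
    also have "\<dots> = pi powr (- N / 2) * \<theta> powr (N / 2)"
      using th0 by (simp add: powr_mult powr_divide powr_minus_divide divide_simps)
    finally show ?thesis .
  qed
  have b2: "1 / v \<le> \<theta>" using ea(2) th0 v0 by (simp add: divide_simps mult.commute)
  have "EE N Z p \<theta> \<tau> \<le> (4 * pi * \<theta>) powr (- (N * (p - 1) / 2)) *
      (2 * (p / (4 * \<theta>)) * K1 N Z p * \<theta> powr (- N / 2) * \<tau> powr (- (N * (p - 1) / 2))) * Z *
      (pi powr (- N / 2) * \<theta> powr (N / 2)) * \<theta>"
    unfolding ea(1)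
    by (intro mult_mono AA_le[OF Z p t N] b1 b2 mult_nonneg_nonneg) (use Z AA0 v0 K1_pos[OF Z, of N p] p th0 in auto)
  also have "\<dots> = KE N Z p * ((4 * pi * \<theta>) powr (- (N * (p - 1) / 2)) / (4 * pi) powr (- (N * (p - 1) / 2))) * \<tau> powr (- (N * (p - 1) / 2)) *
      (\<theta> powr (- N / 2) * \<theta> powr (N / 2))"
    unfolding KE_def using th0 by (simp add: field_simps)
  also have "\<theta> powr (- N / 2) * \<theta> powr (N / 2) = 1" using th0 by (simp add: powr_add[symmetric])
  also have "(4 * pi * \<theta>) powr (- (N * (p - 1) / 2)) / (4 * pi) powr (- (N * (p - 1) / 2)) = \<theta> powr (- (N * (p - 1) / 2))"
    using th0 by (simp add: powr_mult)
  finally show "EE N Z p \<theta> \<tau> \<le> KE N Z p * \<theta> powr (- (N * (p - 1) / 2)) * \<tau> powr (- (N * (p - 1) / 2))"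
    by (simp add: mult_ac)
qed



lemma EE_int:
  assumes Z: "Z > 0" and p: "p \<ge> 1" and N: "N \<ge> 0" and th0: "\<theta> > 0" and th1: "\<theta> < 1" and q: "N * (p - 1) / 2 < 1"
  shows "set_integrable lborel {0<..<\<theta>} (\<lambda>\<tau>. EE N Z p \<theta> \<tau>)"
    and "(LINT \<tau>:{0<..<\<theta>}|lborel. EE N Z p \<theta> \<tau>) \<le> KE N Z p * \<theta> powr (- (N * (p - 1) / 2)) *
           (\<theta> powr (- (N * (p - 1) / 2) + 1) / (- (N * (p - 1) / 2) + 1))"
proof -
  let ?C = "KE N Z p * \<theta> powr (- (N * (p - 1) / 2))"
  have pi: "set_integrable lborel {0<..<\<theta>} (\<lambda>\<tau>. \<tau> powr (- (N * (p - 1) / 2)))"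
    by (rule powr_int) (use q th0 in auto)
  have b: "norm (indicator {0<..<\<theta>} \<tau> *\<^sub>R EE N Z p \<theta> \<tau>) \<le>
      norm (?C * (indicator {0<..<\<theta>} \<tau> *\<^sub>R \<tau> powr (- (N * (p - 1) / 2))))" for \<tau>
  proof (cases "\<tau> \<in> {0<..<\<theta>}")
    case True
    then show ?thesis using EE_bounds[OF Z p N _ _ th1, of \<tau>] by (auto simp: mult_ac)
  qed simp
  show si: "set_integrable lborel {0<..<\<theta>} (\<lambda>\<tau>. EE N Z p \<theta> \<tau>)"
    unfolding set_integrable_def
  proof (rule Bochner_Integration.integrable_bound)
    show "integrable lborel (\<lambda>\<tau>. ?C * (indicator {0<..<\<theta>} \<tau> *\<^sub>R \<tau> powr (- (N * (p - 1) / 2))))"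
      using pi unfolding set_integrable_def by simp
  qed (use b in auto)
  have "(LINT \<tau>:{0<..<\<theta>}|lborel. EE N Z p \<theta> \<tau>) \<le> (LINT \<tau>:{0<..<\<theta>}|lborel. ?C * \<tau> powr (- (N * (p - 1) / 2)))"
    unfolding set_lebesgue_integral_def
  proof (rule integral_mono)
    show "integrable lborel (\<lambda>\<tau>. indicator {0<..<\<theta>} \<tau> *\<^sub>R EE N Z p \<theta> \<tau>)" using si unfolding set_integrable_def .
    have "integrable lborel (\<lambda>\<tau>. ?C * (indicator {0<..<\<theta>} \<tau> *\<^sub>R \<tau> powr (- (N * (p - 1) / 2))))"
      using pi unfolding set_integrable_def by simp
    moreover have "(\<lambda>\<tau>. indicator {0<..<\<theta>} \<tau> *\<^sub>R (?C * \<tau> powr (- (N * (p - 1) / 2)))) =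
        (\<lambda>\<tau>. ?C * (indicator {0<..<\<theta>} \<tau> *\<^sub>R \<tau> powr (- (N * (p - 1) / 2))))"
      by (rule ext) simp
    ultimately show "integrable lborel (\<lambda>\<tau>. indicator {0<..<\<theta>} \<tau> *\<^sub>R (?C * \<tau> powr (- (N * (p - 1) / 2))))"
      by simp
    fix \<tau> :: real
    show "indicator {0<..<\<theta>} \<tau> *\<^sub>R EE N Z p \<theta> \<tau> \<le> indicator {0<..<\<theta>} \<tau> *\<^sub>R (?C * \<tau> powr (- (N * (p - 1) / 2)))"
    proof (cases "\<tau> \<in> {0<..<\<theta>}")
      case True
      then show ?thesis using EE_bounds[OF Z p N _ _ th1, of \<tau>] by (auto simp: mult_ac)
    qed simp
  qed
  also have "\<dots> = ?C * (\<theta> powr (- (N * (p - 1) / 2) + 1) / (- (N * (p - 1) / 2) + 1))"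
    using powr_int(2)[of "- (N * (p - 1) / 2)" \<theta>] q th0 by simp
  finally show "(LINT \<tau>:{0<..<\<theta>}|lborel. EE N Z p \<theta> \<tau>) \<le> ?C * (\<theta> powr (- (N * (p - 1) / 2) + 1) / (- (N * (p - 1) / 2) + 1))" .
qed

lemma dd_pos: "p \<ge> 1 \<Longrightarrow> 0 < \<tau> \<Longrightarrow> \<tau> < \<theta> \<Longrightarrow> \<theta> < 1 \<Longrightarrow> dd p \<theta> \<tau> > 0"
proof -
  assume p: "p \<ge> 1" and t: "0 < \<tau>" "\<tau> < \<theta>" and th1: "\<theta> < 1"
  have "al \<theta> > 0" unfolding al_def using th1 by simp
  moreover have "bb p \<theta> \<tau> > 0" unfolding bb_def using gg_pos[OF p t] p t by (auto intro!: add_nonneg_pos)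
  ultimately show ?thesis unfolding dd_def by simp
qed

lemma texp_le: "t \<ge> 0 \<Longrightarrow> t * exp (- t) \<le> (1::real)"
proof -
  assume "t \<ge> 0"
  have "t \<le> exp t" using exp_ge_add_one_self[of t] by linarith
  then have "t * exp (- t) \<le> exp t * exp (- t)" by (intro mult_right_mono) auto
  then show ?thesis by (simp add: exp_minus)
qed

lemma kprime_bound:
  fixes a z :: "'a::real_inner"
  assumes d: "d \<ge> 0" and E: "E \<ge> 0"
  shows "\<bar>- E * ((a \<bullet> a) - 2 * d * (a \<bullet> z)\<^sup>2) * exp (- d * (norm z)\<^sup>2)\<bar> \<le> 3 * (a \<bullet> a) * E"
proof -
  have cs: "(a \<bullet> z)\<^sup>2 \<le> (a \<bullet> a) * (norm z)\<^sup>2"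
  proof -
    have "\<bar>a \<bullet> z\<bar> \<le> norm a * norm z" by (rule Cauchy_Schwarz_ineq2)
    then have "\<bar>a \<bullet> z\<bar>\<^sup>2 \<le> (norm a * norm z)\<^sup>2" by (intro power_mono) auto
    then show ?thesis by (simp add: power_mult_distrib power2_norm_eq_inner)
  qed
  have h1: "0 \<le> a \<bullet> a" by simp
  have h2: "0 \<le> 2 * d * (a \<bullet> z)\<^sup>2" using d by simp
  have "\<bar>(a \<bullet> a) - 2 * d * (a \<bullet> z)\<^sup>2\<bar> \<le> (a \<bullet> a) + 2 * d * (a \<bullet> z)\<^sup>2"
    unfolding abs_le_iff using h1 h2 by linarith
  also have "\<dots> \<le> (a \<bullet> a) + 2 * d * ((a \<bullet> a) * (norm z)\<^sup>2)" using cs d by (intro add_left_mono mult_left_mono) auto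
  finally have 1: "\<bar>(a \<bullet> a) - 2 * d * (a \<bullet> z)\<^sup>2\<bar> * exp (- d * (norm z)\<^sup>2) \<le>
      ((a \<bullet> a) + 2 * d * ((a \<bullet> a) * (norm z)\<^sup>2)) * exp (- d * (norm z)\<^sup>2)" by (intro mult_right_mono) auto
  have e1: "exp (- d * (norm z)\<^sup>2) \<le> 1" using d by simp
  have e2: "(d * (norm z)\<^sup>2) * exp (- (d * (norm z)\<^sup>2)) \<le> 1" by (rule texp_le) (use d in simp)
  have "((a \<bullet> a) + 2 * d * ((a \<bullet> a) * (norm z)\<^sup>2)) * exp (- d * (norm z)\<^sup>2) =
     (a \<bullet> a) * exp (- d * (norm z)\<^sup>2) + 2 * (a \<bullet> a) * ((d * (norm z)\<^sup>2) * exp (- (d * (norm z)\<^sup>2)))"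
    by (simp add: algebra_simps)
  also have "\<dots> \<le> (a \<bullet> a) * 1 + 2 * (a \<bullet> a) * 1"
    using e1 e2 by (intro add_mono mult_left_mono) auto
  finally have 2: "\<bar>(a \<bullet> a) - 2 * d * (a \<bullet> z)\<^sup>2\<bar> * exp (- d * (norm z)\<^sup>2) \<le> 3 * (a \<bullet> a)" by (intro order_trans[OF 1]) simp
  have "\<bar>- E * ((a \<bullet> a) - 2 * d * (a \<bullet> z)\<^sup>2) * exp (- d * (norm z)\<^sup>2)\<bar> =
     E * (\<bar>(a \<bullet> a) - 2 * d * (a \<bullet> z)\<^sup>2\<bar> * exp (- d * (norm z)\<^sup>2))" using E by (simp add: abs_mult)
  also have "\<dots> \<le> E * (3 * (a \<bullet> a))" using 2 E by (intro mult_left_mono) auto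
  finally show ?thesis by (simp add: mult_ac)
qed

lemma outer_dd:
  fixes a x :: "real^'n"
  assumes Z: "Z > 0" and N: "N \<ge> 0" and p: "p > 1" and q: "N * (p - 1) / 2 < 1" and th0: "0 < \<theta>" and th1: "\<theta> < 1"
  shows "dir_deriv a (\<lambda>x. LINT \<tau>:{0<..<\<theta>}|lborel. - (a \<bullet> x) * EE N Z p \<theta> \<tau> * exp (- dd p \<theta> \<tau> * (norm x)\<^sup>2)) x
    = (LINT \<tau>:{0<..<\<theta>}|lborel. - EE N Z p \<theta> \<tau> * ((a \<bullet> a) - 2 * dd p \<theta> \<tau> * (a \<bullet> x)\<^sup>2) * exp (- dd p \<theta> \<tau> * (norm x)\<^sup>2))"
proof -
  let ?S = "{0<..<\<theta>} :: real set"
  define k where "k h \<tau> = indicator ?S \<tau> *\<^sub>R (- (a \<bullet> (x + h *\<^sub>R a)) * EE N Z p \<theta> \<tau> * exp (- dd p \<theta> \<tau> * (norm (x + h *\<^sub>R a))\<^sup>2))" for h \<tau>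
  define k' where "k' h \<tau> = indicator ?S \<tau> *\<^sub>R (- EE N Z p \<theta> \<tau> * ((a \<bullet> a) - 2 * dd p \<theta> \<tau> * (a \<bullet> (x + h *\<^sub>R a))\<^sup>2) * exp (- dd p \<theta> \<tau> * (norm (x + h *\<^sub>R a))\<^sup>2))" for h \<tau>
  define w where "w \<tau> = 3 * (a \<bullet> a) * (indicator ?S \<tau> *\<^sub>R EE N Z p \<theta> \<tau>)" for \<tau>
  have p1: "p \<ge> 1" using p by simp
  note Ei = EE_int[OF Z p1 N th0 th1 q]
  have D: "DERIV (\<lambda>h. \<integral>\<tau>. k h \<tau> \<partial>lborel) 0 :> (\<integral>\<tau>. k' 0 \<tau> \<partial>lborel)"
  proof (rule deriv_under_int[where w=w])
    show "k h \<in> borel_measurable lborel" for h unfolding k_def by measurable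
    show "k' h \<in> borel_measurable lborel" for h unfolding k'_def by measurable
    show "integrable lborel w" unfolding w_def using Ei(1) unfolding set_integrable_def by simp
    show "integrable lborel (k 0)"
    proof (rule Bochner_Integration.integrable_bound)
      show "integrable lborel (\<lambda>\<tau>. \<bar>a \<bullet> x\<bar> * (indicator ?S \<tau> *\<^sub>R EE N Z p \<theta> \<tau>))"
        using Ei(1) unfolding set_integrable_def by simp
      show "AE \<tau> in lborel. norm (k 0 \<tau>) \<le> norm (\<bar>a \<bullet> x\<bar> * (indicator ?S \<tau> *\<^sub>R EE N Z p \<theta> \<tau>))"
      proof (rule AE_I2)
        fix \<tau> :: real
        show "norm (k 0 \<tau>) \<le> norm (\<bar>a \<bullet> x\<bar> * (indicator ?S \<tau> *\<^sub>R EE N Z p \<theta> \<tau>))"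
        proof (cases "\<tau> \<in> ?S")
          case True
          have E0: "EE N Z p \<theta> \<tau> > 0" using EE_bounds(1)[OF Z p1 N _ _ th1] True by auto
          have "exp (- dd p \<theta> \<tau> * (norm x)\<^sup>2) \<le> 1" using dd_pos[OF p1 _ _ th1, of \<tau>] True by auto
          then have "\<bar>a \<bullet> x\<bar> * EE N Z p \<theta> \<tau> * exp (- dd p \<theta> \<tau> * (norm x)\<^sup>2) \<le> \<bar>a \<bullet> x\<bar> * EE N Z p \<theta> \<tau> * 1"
            using E0 by (intro mult_left_mono) auto
          then show ?thesis using True E0 unfolding k_def by (simp add: abs_mult)
        qed (simp add: k_def)
      qed
    qed (unfold k_def, measurable)
    show "DERIV (\<lambda>h. k h \<tau>) h :> k' h \<tau>" if "\<tau> \<in> space lborel" for h \<tau>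
    proof -
      have "DERIV (\<lambda>h. (- (indicator ?S \<tau> * EE N Z p \<theta> \<tau>)) * ((a \<bullet> (x + h *\<^sub>R a)) * exp (- dd p \<theta> \<tau> * (norm (x + h *\<^sub>R a))\<^sup>2))) h :>
          (- (indicator ?S \<tau> * EE N Z p \<theta> \<tau>)) * (((a \<bullet> a) - 2 * dd p \<theta> \<tau> * (a \<bullet> (x + h *\<^sub>R a))\<^sup>2) * exp (- dd p \<theta> \<tau> * (norm (x + h *\<^sub>R a))\<^sup>2))"
        by (rule DERIV_cmult[OF deriv_gauss_lin])
      then show ?thesis unfolding k_def k'_def by (simp add: mult_ac)
    qed
    show "\<bar>k' h \<tau>\<bar> \<le> w \<tau>" if "\<tau> \<in> space lborel" for h \<tau>
    proof (cases "\<tau> \<in> ?S")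
      case True
      have E0: "EE N Z p \<theta> \<tau> > 0" using EE_bounds(1)[OF Z p1 N _ _ th1] True by auto
      have d0: "dd p \<theta> \<tau> > 0" using dd_pos[OF p1 _ _ th1, of \<tau>] True by auto
      show ?thesis using True kprime_bound[of "dd p \<theta> \<tau>" "EE N Z p \<theta> \<tau>" a "x + h *\<^sub>R a"] E0 d0
        unfolding k'_def w_def by (simp add: mult_ac)
    qed (simp add: k'_def w_def)
  qed
  have "dir_deriv a (\<lambda>x. LINT \<tau>:?S|lborel. - (a \<bullet> x) * EE N Z p \<theta> \<tau> * exp (- dd p \<theta> \<tau> * (norm x)\<^sup>2)) x
      = deriv (\<lambda>h. \<integral>\<tau>. k h \<tau> \<partial>lborel) 0"
    unfolding dir_deriv_def set_lebesgue_integral_def k_def ..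
  also have "\<dots> = (\<integral>\<tau>. k' 0 \<tau> \<partial>lborel)" by (rule DERIV_imp_deriv[OF D])
  also have "\<dots> = (LINT \<tau>:?S|lborel. - EE N Z p \<theta> \<tau> * ((a \<bullet> a) - 2 * dd p \<theta> \<tau> * (a \<bullet> x)\<^sup>2) * exp (- dd p \<theta> \<tau> * (norm x)\<^sup>2))"
    unfolding set_lebesgue_integral_def k'_def by simp
  finally show ?thesis .
qed



lemma set_int_pos:
  fixes f :: "real \<Rightarrow> real"
  assumes si: "set_integrable lborel {c<..<d} f" and cd: "c < d" and pos: "\<And>x. x \<in> {c<..<d} \<Longrightarrow> f x > 0"
  shows "(LINT x:{c<..<d}|lborel. f x) > 0"
proof -
  let ?g = "\<lambda>x. indicator {c<..<d} x *\<^sub>R f x"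
  have gi: "integrable lborel ?g" using si unfolding set_integrable_def .
  have nn: "AE x in lborel. 0 \<le> ?g x" using pos by (auto intro!: AE_I2 simp: less_imp_le indicator_def)
  have ge: "0 \<le> (LINT x:{c<..<d}|lborel. f x)"
    unfolding set_lebesgue_integral_def using nn by (rule integral_nonneg_AE)
  have "(LINT x:{c<..<d}|lborel. f x) \<noteq> 0"
  proof
    assume "(LINT x:{c<..<d}|lborel. f x) = 0"
    then have "AE x in lborel. ?g x = 0"
      using integral_nonneg_eq_0_iff_AE[OF gi nn] unfolding set_lebesgue_integral_def by simp
    then have "AE x in lborel. x \<notin> {c<..<d}"
      by eventually_elim (use pos in \<open>fastforce simp: indicator_def split: if_splits\<close>)
    then have "{c<..<d} \<in> null_sets lborel" by (subst AE_iff_null_sets) auto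
    then show False using cd by (simp add: null_sets_def)
  qed
  with ge show ?thesis by simp
qed

lemma S02_formula:
  fixes a x :: "real^'n"
  assumes p: "p > 1" and q: "real CARD('n) * (p - 1) / 2 < 1"
  shows "S02 a p x = (LINT \<theta>:{0<..<1}|lborel. LINT \<tau>:{0<..<\<theta>}|lborel.
     - EE (real CARD('n)) (sqrt pi ^ CARD('n)) p \<theta> \<tau> * ((a \<bullet> a) - 2 * dd p \<theta> \<tau> * (a \<bullet> x)\<^sup>2) * exp (- dd p \<theta> \<tau> * (norm x)\<^sup>2))"
  unfolding S02_def
proof (rule set_lebesgue_integral_cong, simp, intro allI impI)
  fix \<theta> :: real assume th: "\<theta> \<in> {0<..<1}"
  have p0: "p > 0" using p by simp
  have e1: "(\<lambda>y. heat_kernel \<theta> y powr (p - 1) *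
       (LINT \<tau>:{0<..<\<theta>}|lborel. dir_deriv a (heat_sg (\<theta> - \<tau>) (\<lambda>z. heat_kernel \<tau> z powr p)) y)) =
     (\<lambda>y. heat_kernel \<theta> y powr (p - 1) *
       (- (a \<bullet> y) * (LINT \<tau>:{0<..<\<theta>}|lborel. AA (real CARD('n)) (sqrt pi ^ CARD('n)) p \<theta> \<tau> * exp (- gg p \<theta> \<tau> * (norm y)\<^sup>2))))"
    by (rule ext) (simp only: inner_int[OF p0])
  have e2: "heat_sg (1 - \<theta>) (\<lambda>y. heat_kernel \<theta> y powr (p - 1) *
       (- (a \<bullet> y) * (LINT \<tau>:{0<..<\<theta>}|lborel. AA (real CARD('n)) (sqrt pi ^ CARD('n)) p \<theta> \<tau> * exp (- gg p \<theta> \<tau> * (norm y)\<^sup>2)))) =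
     (\<lambda>x. LINT \<tau>:{0<..<\<theta>}|lborel. - (a \<bullet> x) * EE (real CARD('n)) (sqrt pi ^ CARD('n)) p \<theta> \<tau> * exp (- dd p \<theta> \<tau> * (norm x)\<^sup>2))"
    by (rule ext) (rule outer[OF p q], use th in auto)
  show "dir_deriv a (heat_sg (1 - \<theta>) (\<lambda>y. heat_kernel \<theta> y powr (p - 1) *
       (LINT \<tau>:{0<..<\<theta>}|lborel. dir_deriv a (heat_sg (\<theta> - \<tau>) (\<lambda>z. heat_kernel \<tau> z powr p)) y))) x =
     (LINT \<tau>:{0<..<\<theta>}|lborel. - EE (real CARD('n)) (sqrt pi ^ CARD('n)) p \<theta> \<tau> * ((a \<bullet> a) - 2 * dd p \<theta> \<tau> * (a \<bullet> x)\<^sup>2) * exp (- dd p \<theta> \<tau> * (norm x)\<^sup>2))"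
    unfolding e1 e2 by (rule outer_dd[OF _ _ p q]) (use th in auto)
qed

lemma fst_bm[measurable]: "fst \<in> borel_measurable (lborel \<Otimes>\<^sub>M (lborel :: real measure))"
  by (metis measurable_fst measurable_lborel1)

lemma snd_bm[measurable]: "snd \<in> borel_measurable ((lborel :: real measure) \<Otimes>\<^sub>M lborel)"
  by (metis measurable_snd measurable_lborel1)

lemma ind_tri_bm[measurable]:
  "(\<lambda>z::real \<times> real. indicator {0<..<fst z} (snd z) :: real) \<in> borel_measurable (lborel \<Otimes>\<^sub>M lborel)"
proof -
  have "(\<lambda>z::real \<times> real. indicator {0<..<fst z} (snd z) :: real) = (\<lambda>z. if 0 < snd z \<and> snd z < fst z then 1 else 0)"
    by (auto simp: indicator_def)
  also have "\<dots> \<in> borel_measurable (lborel \<Otimes>\<^sub>M lborel)" by measurable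
  finally show ?thesis .
qed



theorem mainTheorem11:
  fixes a :: "real ^ 'n" and p :: real
  assumes "1 + 1 / real CARD('n) < p" and "p < 1 + 3 / (2 * real CARD('n))"
    and "a \<noteq> 0"
  shows "continuous_on UNIV (S02 a p) \<and> bounded (range (S02 a p)) \<and> S02 a p 0 < 0"
proof -
  define N where "N = real CARD('n)"
  define Z where "Z = sqrt pi ^ CARD('n)"
  define q where "q = N * (p - 1) / 2"
  have N1: "N \<ge> 1" unfolding N_def by simp
  have N0: "N \<ge> 0" using N1 by simp
  have Z: "Z > 0" unfolding Z_def by simp
  have p: "p > 1" using assms(1) N1 unfolding N_def by (smt (verit) divide_pos_pos)
  have p1: "p \<ge> 1" using p by simp
  have q: "q < 1"
  proof -
    have "p - 1 < 3 / (2 * N)" using assms(2) unfolding N_def by simp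
    then have "N * (p - 1) < N * (3 / (2 * N))" using N1 by (intro mult_strict_left_mono) auto
    also have "\<dots> = 3 / 2" using N1 by simp
    finally show ?thesis unfolding q_def by simp
  qed
  have qN: "N * (p - 1) / 2 < 1" using q unfolding q_def .
  have q0: "q \<ge> 0" unfolding q_def using N0 p by simp
  define g where "g \<theta> \<tau> x = - EE N Z p \<theta> \<tau> * ((a \<bullet> a) - 2 * dd p \<theta> \<tau> * (a \<bullet> x)\<^sup>2) * exp (- dd p \<theta> \<tau> * (norm x)\<^sup>2)"
    for \<theta> \<tau> and x :: "real^'n"
  define D where "D \<theta> x = (LINT \<tau>:{0<..<\<theta>}|lborel. g \<theta> \<tau> x)" for \<theta> and x :: "real^'n"
  have S: "S02 a p x = (LINT \<theta>:{0<..<1}|lborel. D \<theta> x)" for x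
    unfolding D_def g_def N_def Z_def by (rule S02_formula[OF p qN[unfolded N_def]])
  define W where "W \<theta> = indicator {0<..<1} \<theta> * (3 * (a \<bullet> a) * (KE N Z p / (1 - q)) * \<theta> powr (1 - 2 * q))" for \<theta> :: real
  have gm[measurable]: "(\<lambda>\<tau>. g \<theta> \<tau> x) \<in> borel_measurable lborel" for \<theta> x
    unfolding g_def by measurable
  have gb: "\<bar>g \<theta> \<tau> x\<bar> \<le> 3 * (a \<bullet> a) * EE N Z p \<theta> \<tau>" if "\<tau> \<in> {0<..<\<theta>}" "\<theta> < 1" for \<theta> \<tau> x
    unfolding g_def
    by (rule kprime_bound) (use that dd_pos[OF p1, of \<tau> \<theta>] EE_bounds(1)[OF Z p1 N0, of \<tau> \<theta>] in auto)
  have gi: "set_integrable lborel {0<..<\<theta>} (\<lambda>\<tau>. g \<theta> \<tau> x)" if th: "0 < \<theta>" "\<theta> < 1" for \<theta> x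
    unfolding set_integrable_def
  proof (rule Bochner_Integration.integrable_bound)
    show "integrable lborel (\<lambda>\<tau>. 3 * (a \<bullet> a) * (indicator {0<..<\<theta>} \<tau> *\<^sub>R EE N Z p \<theta> \<tau>))"
      using EE_int(1)[OF Z p1 N0 th qN] unfolding set_integrable_def by simp
    show "AE \<tau> in lborel. norm (indicator {0<..<\<theta>} \<tau> *\<^sub>R g \<theta> \<tau> x) \<le> norm (3 * (a \<bullet> a) * (indicator {0<..<\<theta>} \<tau> *\<^sub>R EE N Z p \<theta> \<tau>))"
    proof (rule AE_I2)
      fix \<tau> show "norm (indicator {0<..<\<theta>} \<tau> *\<^sub>R g \<theta> \<tau> x) \<le> norm (3 * (a \<bullet> a) * (indicator {0<..<\<theta>} \<tau> *\<^sub>R EE N Z p \<theta> \<tau>))"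
        using gb[of \<tau> \<theta> x] th EE_bounds(1)[OF Z p1 N0, of \<tau> \<theta>] by (cases "\<tau> \<in> {0<..<\<theta>}") auto
    qed
  qed measurable
  have Db: "\<bar>D \<theta> x\<bar> \<le> W \<theta>" if th: "0 < \<theta>" "\<theta> < 1" for \<theta> x
  proof -
    have "\<bar>D \<theta> x\<bar> \<le> (LINT \<tau>:{0<..<\<theta>}|lborel. norm (g \<theta> \<tau> x))"
      unfolding D_def using set_integral_norm_bound[OF gi[OF th]] by simp
    also have "\<dots> \<le> (LINT \<tau>:{0<..<\<theta>}|lborel. 3 * (a \<bullet> a) * EE N Z p \<theta> \<tau>)"
      unfolding set_lebesgue_integral_def
    proof (rule integral_mono)
      show "integrable lborel (\<lambda>\<tau>. indicator {0<..<\<theta>} \<tau> *\<^sub>R norm (g \<theta> \<tau> x))"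
        using integrable_norm[OF gi[OF th, of x, unfolded set_integrable_def]] by (simp add: abs_mult)
      show "integrable lborel (\<lambda>\<tau>. indicator {0<..<\<theta>} \<tau> *\<^sub>R (3 * (a \<bullet> a) * EE N Z p \<theta> \<tau>))"
        using integrable_mult_right[OF EE_int(1)[OF Z p1 N0 th qN, unfolded set_integrable_def], of "3 * (a \<bullet> a)"]
        by (simp add: mult.left_commute)
      fix \<tau> show "indicator {0<..<\<theta>} \<tau> *\<^sub>R norm (g \<theta> \<tau> x) \<le> indicator {0<..<\<theta>} \<tau> *\<^sub>R (3 * (a \<bullet> a) * EE N Z p \<theta> \<tau>)"
        using gb[of \<tau> \<theta> x] th by (cases "\<tau> \<in> {0<..<\<theta>}") auto
    qed
    also have "\<dots> = 3 * (a \<bullet> a) * (LINT \<tau>:{0<..<\<theta>}|lborel. EE N Z p \<theta> \<tau>)" by simp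
    also have "\<dots> \<le> 3 * (a \<bullet> a) * (KE N Z p * \<theta> powr (- q) * (\<theta> powr (- q + 1) / (- q + 1)))"
      using EE_int(2)[OF Z p1 N0 th qN] unfolding q_def by (intro mult_left_mono) auto
    also have "\<dots> = W \<theta>"
    proof -
      have "\<theta> powr (- q) * \<theta> powr (- q + 1) = \<theta> powr (1 - 2 * q)" using th by (simp add: powr_add[symmetric])
      then show ?thesis unfolding W_def using th by (simp add: field_simps)
    qed
    finally show ?thesis .
  qed
  have Wi: "integrable lborel W"
  proof -
    have "set_integrable lborel {0<..<1} (\<lambda>\<theta>. \<theta> powr (1 - 2 * q))" by (rule powr_int) (use q in auto)
    then have "integrable lborel (\<lambda>\<theta>. (3 * (a \<bullet> a) * (KE N Z p / (1 - q))) * (indicator {0<..<1} \<theta> *\<^sub>R \<theta> powr (1 - 2 * q)))"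
      unfolding set_integrable_def by (rule integrable_mult_right)
    moreover have "W = (\<lambda>\<theta>. (3 * (a \<bullet> a) * (KE N Z p / (1 - q))) * (indicator {0<..<1} \<theta> *\<^sub>R \<theta> powr (1 - 2 * q)))"
      by (rule ext) (simp add: W_def indicator_def)
    ultimately show ?thesis by simp
  qed
  have Dm: "(\<lambda>\<theta>. indicator {0<..<1} \<theta> *\<^sub>R D \<theta> x) \<in> borel_measurable lborel" for x
    unfolding D_def set_lebesgue_integral_def g_def by measurable
  have fb: "\<bar>indicator {0<..<1} \<theta> *\<^sub>R D \<theta> x\<bar> \<le> W \<theta>" for \<theta> x
    using Db[of \<theta> x] by (cases "\<theta> \<in> {0<..<1}") (auto simp: W_def)
  have Dc: "continuous_on UNIV (\<lambda>x. D \<theta> x)" if th: "0 < \<theta>" "\<theta> < 1" for \<theta>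
    unfolding D_def set_lebesgue_integral_def
  proof (rule cont_param_int[where w="\<lambda>\<tau>. 3 * (a \<bullet> a) * (indicator {0<..<\<theta>} \<tau> *\<^sub>R EE N Z p \<theta> \<tau>)"])
    show "(\<lambda>\<tau>. indicator {0<..<\<theta>} \<tau> *\<^sub>R g \<theta> \<tau> x) \<in> borel_measurable lborel" for x by measurable
    show "integrable lborel (\<lambda>\<tau>. 3 * (a \<bullet> a) * (indicator {0<..<\<theta>} \<tau> *\<^sub>R EE N Z p \<theta> \<tau>))"
      using EE_int(1)[OF Z p1 N0 th qN] unfolding set_integrable_def by simp
    show "\<bar>indicator {0<..<\<theta>} \<tau> *\<^sub>R g \<theta> \<tau> x\<bar> \<le> 3 * (a \<bullet> a) * (indicator {0<..<\<theta>} \<tau> *\<^sub>R EE N Z p \<theta> \<tau>)" for x \<tau>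
      using gb[of \<tau> \<theta> x] th by (cases "\<tau> \<in> {0<..<\<theta>}") auto
    show "continuous_on UNIV (\<lambda>x. indicator {0<..<\<theta>} \<tau> *\<^sub>R g \<theta> \<tau> x)" for \<tau>
      unfolding g_def by (intro continuous_intros)
  qed
  have fc: "continuous_on UNIV (\<lambda>x. indicator {0<..<1} \<theta> *\<^sub>R D \<theta> x)" for \<theta>
  proof (cases "\<theta> \<in> {0<..<1}")
    case True
    then show ?thesis using Dc[of \<theta>] by (simp add: continuous_on_const)
  qed (simp add: continuous_on_const)
  have cont: "continuous_on UNIV (S02 a p)"
  proof -
    have "continuous_on UNIV (\<lambda>x. \<integral>\<theta>. indicator {0<..<1} \<theta> *\<^sub>R D \<theta> x \<partial>lborel)"
      by (rule cont_param_int[where w=W]) (use Dm Wi fb fc in auto)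
    moreover have "S02 a p = (\<lambda>x. \<integral>\<theta>. indicator {0<..<1} \<theta> *\<^sub>R D \<theta> x \<partial>lborel)"
      by (rule ext) (simp add: S set_lebesgue_integral_def)
    ultimately show ?thesis by simp
  qed
  have bnd: "bounded (range (S02 a p))"
    unfolding bounded_iff
  proof (intro exI ballI)
    fix y assume "y \<in> range (S02 a p)"
    then obtain x where y: "y = S02 a p x" by blast
    have "norm y = norm (\<integral>\<theta>. indicator {0<..<1} \<theta> *\<^sub>R D \<theta> x \<partial>lborel)"
      unfolding y S set_lebesgue_integral_def ..
    also have "\<dots> \<le> (\<integral>\<theta>. norm (indicator {0<..<1} \<theta> *\<^sub>R D \<theta> x) \<partial>lborel)"
      by (rule integral_norm_bound)
    also have "\<dots> \<le> (\<integral>\<theta>. W \<theta> \<partial>lborel)"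
    proof (rule integral_mono)
      show "integrable lborel (\<lambda>\<theta>. norm (indicator {0<..<1} \<theta> *\<^sub>R D \<theta> x))"
        by (rule integrable_norm, rule Bochner_Integration.integrable_bound[OF Wi]) (use Dm fb in \<open>auto intro!: AE_I2 order_trans[OF _ abs_ge_self]\<close>)
    qed (use Wi fb in auto)
    finally show "norm y \<le> (\<integral>\<theta>. W \<theta> \<partial>lborel)" .
  qed
  have neg: "S02 a p 0 < 0"
  proof -
    have aa: "a \<bullet> a > 0" using assms(3) by simp
    have D0: "- D \<theta> 0 > 0" if th: "\<theta> \<in> {0<..<1}" for \<theta>
    proof -
      have "D \<theta> 0 = (LINT \<tau>:{0<..<\<theta>}|lborel. (- (a \<bullet> a)) * EE N Z p \<theta> \<tau>)"
        unfolding D_def g_def by (simp add: mult.commute)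
      also have "\<dots> = - (a \<bullet> a) * (LINT \<tau>:{0<..<\<theta>}|lborel. EE N Z p \<theta> \<tau>)" by (rule set_integral_mult_right)
      finally have e: "D \<theta> 0 = - (a \<bullet> a) * (LINT \<tau>:{0<..<\<theta>}|lborel. EE N Z p \<theta> \<tau>)" .
      have "(LINT \<tau>:{0<..<\<theta>}|lborel. EE N Z p \<theta> \<tau>) > 0"
        by (rule set_int_pos) (use th EE_int(1)[OF Z p1 N0 _ _ qN, of \<theta>] EE_bounds(1)[OF Z p1 N0] in auto)
      then show ?thesis unfolding e using aa by simp
    qed
    have si: "set_integrable lborel {0<..<1} (\<lambda>\<theta>. - D \<theta> 0)"
      unfolding set_integrable_def
    proof (rule Bochner_Integration.integrable_bound[OF Wi])
      show "AE \<theta> in lborel. norm (indicator {0<..<1} \<theta> *\<^sub>R - D \<theta> 0) \<le> norm (W \<theta>)"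
      proof (rule AE_I2)
        fix \<theta> :: real
        have "\<bar>indicator {0<..<1} \<theta> *\<^sub>R D \<theta> 0\<bar> \<le> W \<theta>" by (rule fb)
        then show "norm (indicator {0<..<1} \<theta> *\<^sub>R - D \<theta> 0) \<le> norm (W \<theta>)" by simp
      qed
      show "(\<lambda>\<theta>. indicator {0<..<1} \<theta> *\<^sub>R - D \<theta> 0) \<in> borel_measurable lborel"
        using Dm[of 0] by simp
    qed
    have "(LINT \<theta>:{0<..<1}|lborel. - D \<theta> 0) > 0"
      by (rule set_int_pos[OF si]) (use D0 in auto)
    then show ?thesis unfolding S[of 0] set_lebesgue_integral_def by simp
  qed
  show ?thesis using cont bnd neg by blast
qed

end
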